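(* Let $X=(X^1,\dots,X^d)$ be a random vector taking values in a finite product set, and let $W$ be a random variable (on the same probability space) such that for every $i\in[d]$, $X^i$ is conditionally independent of $X^{-i}$ given $W$. Then $\mathcal B(X)\le\mathrm I(X;W)$. If moreover $W$ is discrete, then $\mathcal B(X)\le\mathcal H(W)$.
   Context: $X^{-i}$ denotes $X$ with coordinate $i$ removed. Dual total correlation: $\mathcal B(X)=\mathcal H(X)-\sum_{i=1}^d\mathcal H(X^i\mid X^{-i})$, with $\mathcal H$ Shannon entropy; $\mathrm I$ is mutual information. *)

theory Defs
  imports "HOL-Probability.Probability"
begin

definition pmass :: "'a measure \<Rightarrow> ('a \<Rightarrow> 'b) \<Rightarrow> 'b \<Rightarrow> real" where
  "pmass M Y y = measure M {\<omega> \<in> space M. Y \<omega> = y}"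

definition shannon_entropy :: "real \<Rightarrow> 'a measure \<Rightarrow> ('a \<Rightarrow> 'b) \<Rightarrow> real" where
  "shannon_entropy b M Y = - (\<Sum>y \<in> Y ` space M. pmass M Y y * log b (pmass M Y y))"

definition cond_shannon_entropy :: "real \<Rightarrow> 'a measure \<Rightarrow> ('a \<Rightarrow> 'b) \<Rightarrow> ('a \<Rightarrow> 'c) \<Rightarrow> real" where
  "cond_shannon_entropy b M Y Z =
     - (\<Sum>(y, z) \<in> (\<lambda>\<omega>. (Y \<omega>, Z \<omega>)) ` space M.
          pmass M (\<lambda>\<omega>. (Y \<omega>, Z \<omega>)) (y, z)
          * log b (pmass M (\<lambda>\<omega>. (Y \<omega>, Z \<omega>)) (y, z) / pmass M Z z))"

definition rvec :: "nat \<Rightarrow> (nat \<Rightarrow> 'a \<Rightarrow> 'v) \<Rightarrow> 'a \<Rightarrow> 'v list" where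
  "rvec d X \<omega> = map (\<lambda>j. X j \<omega>) [0..<d]"

definition rvec_minus :: "nat \<Rightarrow> (nat \<Rightarrow> 'a \<Rightarrow> 'v) \<Rightarrow> nat \<Rightarrow> 'a \<Rightarrow> 'v list" where
  "rvec_minus d X i \<omega> = map (\<lambda>j. X j \<omega>) (filter (\<lambda>j. j \<noteq> i) [0..<d])"

definition dual_total_correlation :: "real \<Rightarrow> 'a measure \<Rightarrow> nat \<Rightarrow> (nat \<Rightarrow> 'a \<Rightarrow> 'v) \<Rightarrow> real" where
  "dual_total_correlation b M d X =
     shannon_entropy b M (rvec d X) - (\<Sum>i<d. cond_shannon_entropy b M (X i) (rvec_minus d X i))"

definition cond_indep_given :: "'a measure \<Rightarrow> 'w measure \<Rightarrow> ('a \<Rightarrow> 'w) \<Rightarrow> ('a \<Rightarrow> 'b) \<Rightarrow> ('a \<Rightarrow> 'c) \<Rightarrow> bool" where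
  "cond_indep_given M N W Y Z \<longleftrightarrow>
     (\<forall>A B. AE \<omega> in M.
        real_cond_exp M (vimage_algebra (space M) W N)
          (indicator {\<omega> \<in> space M. Y \<omega> \<in> A \<and> Z \<omega> \<in> B}) \<omega>
        = real_cond_exp M (vimage_algebra (space M) W N) (indicator {\<omega> \<in> space M. Y \<omega> \<in> A}) \<omega>
          * real_cond_exp M (vimage_algebra (space M) W N) (indicator {\<omega> \<in> space M. Z \<omega> \<in> B}) \<omega>)"

definition discrete_entropy :: "real \<Rightarrow> 'a measure \<Rightarrow> ('a \<Rightarrow> 'w) \<Rightarrow> ennreal" where
  "discrete_entropy b M W =
     (\<integral>\<^sup>+ w. ennreal (- (pmass M W w * log b (pmass M W w))) \<partial>count_space (W ` space M))"

end

theory Submission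
  imports Defs
begin

lemma log_le_lin:
  assumes b: "1 < b" and t: "0 < t"
  shows "log b t \<le> (t - 1) / ln b"
proof -
  have "ln b > 0" using b by simp
  moreover have "ln t \<le> t - 1" using ln_le_minus_one t by simp
  ultimately show ?thesis unfolding log_def by (simp add: divide_right_mono)
qed

lemma log_prod_pos:
  assumes b: "1 < b" and "finite I" and "\<And>i. i \<in> I \<Longrightarrow> 0 < f i"
  shows "log b (\<Prod>i\<in>I. f i) = (\<Sum>i\<in>I. log b (f i))"
  using assms(2,3)
proof (induction I rule: finite_induct)
  case empty then show ?case by simp
next
  case (insert x F)
  have p: "0 < (\<Prod>i\<in>F. f i)" using insert by (simp add: prod_pos)
  have fx: "0 < f x" using insert by simp
  have "log b (\<Prod>i\<in>insert x F. f i) = log b (f x * (\<Prod>i\<in>F. f i))" using insert by simp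
  also have "\<dots> = log b (f x) + log b (\<Prod>i\<in>F. f i)" using p fx b by (simp add: log_mult)
  finally show ?case using insert by simp
qed

lemma sum_prod_lists_le:
  fixes F :: "'v list set" and R :: "nat \<Rightarrow> 'v \<Rightarrow> real"
  assumes "finite F" and F: "\<And>x. x \<in> F \<Longrightarrow> length x = d \<and> (\<forall>i<d. x ! i \<in> S i)"
    and fin: "\<And>i. i < d \<Longrightarrow> finite (S i)" and Rnn: "\<And>i a. 0 \<le> R i a"
  shows "(\<Sum>x\<in>F. \<Prod>i<d. R i (x ! i)) \<le> (\<Prod>i<d. \<Sum>a\<in>S i. R i a)"
proof -
  define h :: "'v list \<Rightarrow> nat \<Rightarrow> 'v" where "h = (\<lambda>x. restrict (\<lambda>i. x ! i) {..<d})"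
  have inj: "inj_on h F"
  proof
    fix x y assume xy: "x \<in> F" "y \<in> F" "h x = h y"
    have "\<forall>i<d. x ! i = y ! i"
    proof (intro allI impI)
      fix i assume "i < d"
      then show "x ! i = y ! i" using fun_cong[OF xy(3), of i] by (simp add: h_def)
    qed
    then show "x = y" using F[OF xy(1)] F[OF xy(2)] by (auto intro!: nth_equalityI)
  qed
  have sub: "h ` F \<subseteq> PiE {..<d} S" using F unfolding h_def by (auto simp: PiE_def Pi_def)
  have "(\<Sum>x\<in>F. \<Prod>i<d. R i (x ! i)) = (\<Sum>p\<in>h ` F. \<Prod>i<d. R i (p i))"
    by (subst sum.reindex[OF inj]) (auto simp: h_def intro!: sum.cong prod.cong)
  also have "\<dots> \<le> (\<Sum>p\<in>PiE {..<d} S. \<Prod>i<d. R i (p i))"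
    by (rule sum_mono2) (auto intro!: finite_PiE fin sub prod_nonneg Rnn)
  also have "\<dots> = (\<Prod>i<d. \<Sum>a\<in>S i. R i a)"
    by (rule prod_sum_PiE[symmetric]) (auto intro: fin)
  finally show ?thesis .
qed

lemma subadditivity_pointwise:
  fixes F :: "'v list set" and Q :: "'v list \<Rightarrow> real" and R :: "nat \<Rightarrow> 'v \<Rightarrow> real"
  assumes b: "1 < b" and finF: "finite F" and F: "\<And>x. x \<in> F \<Longrightarrow> length x = d \<and> (\<forall>i<d. x ! i \<in> S i)"
    and fin: "\<And>i. i < d \<Longrightarrow> finite (S i)"
    and Qnn: "\<And>x. x \<in> F \<Longrightarrow> 0 \<le> Q x" and Q1: "(\<Sum>x\<in>F. Q x) = 1"
    and R: "\<And>i a. i < d \<Longrightarrow> R i a = (\<Sum>x\<in>{x\<in>F. x ! i = a}. Q x)"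
  shows "(\<Sum>i<d. \<Sum>x\<in>F. Q x * log b (R i (x ! i))) \<le> (\<Sum>x\<in>F. Q x * log b (Q x))"
proof -
  define R' where "R' = (\<lambda>i a. if i < d then R i a else 0)"
  have R'nn: "0 \<le> R' i a" for i a
    unfolding R'_def using R Qnn by (auto intro!: sum_nonneg)
  define p where "p = (\<lambda>x. \<Prod>i<d. R' i (x ! i))"
  have lnb: "ln b > 0" using b by simp
  have Rge: "Q x \<le> R' i (x ! i)" if "x \<in> F" "i < d" for x i
  proof -
    have "Q x \<le> (\<Sum>y\<in>{y\<in>F. y ! i = x ! i}. Q y)"
      by (rule member_le_sum) (use that finF Qnn in auto)
    then show ?thesis using R that by (simp add: R'_def)
  qed
  have key: "(\<Sum>i<d. Q x * log b (R i (x ! i))) - Q x * log b (Q x) \<le> (p x - Q x) / ln b"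
    if x: "x \<in> F" for x
  proof (cases "Q x = 0")
    case True
    have "0 \<le> p x" unfolding p_def by (auto intro!: prod_nonneg R'nn)
    then show ?thesis using True lnb by simp
  next
    case False
    then have Qp: "0 < Q x" using Qnn x by (simp add: less_le)
    have Rpos: "0 < R' i (x ! i)" if "i < d" for i using Rge[OF x that] Qp by simp
    have "(\<Sum>i<d. Q x * log b (R i (x ! i))) = Q x * log b (p x)"
      unfolding p_def using Rpos
      by (subst log_prod_pos[OF b]) (auto simp: sum_distrib_left R'_def)
    moreover have pp: "0 < p x" unfolding p_def using Rpos by (auto intro!: prod_pos)
    moreover have "log b (p x) - log b (Q x) = log b (p x / Q x)"
      using pp Qp b by (simp add: log_divide)
    moreover have "log b (p x / Q x) \<le> (p x / Q x - 1) / ln b"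
      using log_le_lin[OF b, of "p x / Q x"] pp Qp by simp
    moreover have "Q x * ((p x / Q x - 1) / ln b) = (p x - Q x) / ln b"
      using Qp lnb by (simp add: field_simps)
    ultimately show ?thesis using Qp
      by (metis mult_left_mono less_imp_le right_diff_distrib)
  qed
  have "(\<Sum>i<d. \<Sum>x\<in>F. Q x * log b (R i (x ! i))) - (\<Sum>x\<in>F. Q x * log b (Q x))
        = (\<Sum>x\<in>F. (\<Sum>i<d. Q x * log b (R i (x ! i))) - Q x * log b (Q x))"
    by (simp add: sum.swap[of _ "{..<d}"] sum_subtractf)
  also have "\<dots> \<le> (\<Sum>x\<in>F. (p x - Q x) / ln b)"
    by (rule sum_mono) (rule key)
  also have "\<dots> = ((\<Sum>x\<in>F. p x) - 1) / ln b"
    using Q1 by (simp add: sum_divide_distrib[symmetric] sum_subtractf)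
  also have "\<dots> \<le> 0"
  proof -
    have "(\<Sum>x\<in>F. p x) \<le> (\<Prod>i<d. \<Sum>a\<in>S i. R' i a)"
      unfolding p_def by (rule sum_prod_lists_le[OF finF F fin R'nn]) auto
    also have "\<dots> = (\<Prod>i<d. (1::real))"
    proof (rule prod.cong[OF refl])
      fix i assume "i \<in> {..<d}"
      then have i: "i < d" by simp
      have "(\<Sum>a\<in>S i. R' i a) = (\<Sum>a\<in>S i. \<Sum>x\<in>{x\<in>F. x ! i = a}. Q x)"
        using i R by (simp add: R'_def)
      also have "\<dots> = (\<Sum>x\<in>F. Q x)"
        by (rule sum.group) (use finF fin i F in auto)
      finally show "(\<Sum>a\<in>S i. R' i a) = 1" using Q1 by simp
    qed
    finally show ?thesis using lnb by (simp add: divide_nonpos_pos)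
  qed
  finally show ?thesis by simp
qed

lemma measurable_count_space_finite_range:
  fixes f :: "'a \<Rightarrow> 'b" and M :: "'a measure"
  assumes "finite (f ` space M)" and "\<And>y. f -` {y} \<inter> space M \<in> sets M"
  shows "f \<in> measurable M (count_space UNIV)"
proof (rule measurableI)
  fix A :: "'b set" assume "A \<in> sets (count_space UNIV)"
  have "f -` A \<inter> space M = (\<Union>y\<in>A \<inter> f ` space M. f -` {y} \<inter> space M)" by auto
  also have "\<dots> \<in> sets M" using assms by (intro sets.finite_UN) auto
  finally show "f -` A \<inter> space M \<in> sets M" .
qed auto

locale dtc = prob_space M for M :: "'a measure" +
  fixes N :: "'w measure" and b :: real and d :: nat
    and X :: "nat \<Rightarrow> 'a \<Rightarrow> 'v" and S :: "nat \<Rightarrow> 'v set" and W :: "'a \<Rightarrow> 'w"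
  assumes b: "1 < b"
    and finS: "\<And>i. i < d \<Longrightarrow> finite (S i)"
    and Xmeas: "\<And>i. i < d \<Longrightarrow> X i \<in> measurable M (count_space UNIV)"
    and XS: "\<And>i \<omega>. i < d \<Longrightarrow> \<omega> \<in> space M \<Longrightarrow> X i \<omega> \<in> S i"
    and Wmeas[measurable]: "W \<in> measurable M N"
begin

lemma meas_list:
  assumes L: "set L \<subseteq> {..<d}"
  shows "(\<lambda>\<omega>. map (\<lambda>j. X j \<omega>) L) \<in> measurable M (count_space UNIV)"
proof (rule measurable_count_space_finite_range)
  let ?f = "\<lambda>\<omega>. map (\<lambda>j. X j \<omega>) L"
  have "?f ` space M \<subseteq> {xs. set xs \<subseteq> (\<Union>i<d. S i) \<and> length xs = length L}"
    using L XS by (force simp: subset_iff)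
  moreover have "finite {xs. set xs \<subseteq> (\<Union>i<d. S i) \<and> length xs = length L}"
    by (rule finite_lists_length_eq) (auto intro: finS)
  ultimately show "finite (?f ` space M)" by (rule finite_subset)
next
  fix y :: "'v list"
  let ?f = "\<lambda>\<omega>. map (\<lambda>j. X j \<omega>) L"
  show "?f -` {y} \<inter> space M \<in> sets M"
  proof (cases "length y = length L")
    case False
    then have "?f -` {y} \<inter> space M = {}" by auto
    then show ?thesis by simp
  next
    case True
    have "?f -` {y} \<inter> space M = space M - (\<Union>k<length L. space M - (X (L ! k) -` {y ! k} \<inter> space M))"
      using True by (auto simp: list_eq_iff_nth_eq)
    also have "\<dots> \<in> sets M"
    proof -
      have "X (L ! k) -` {y ! k} \<inter> space M \<in> sets M" if "k < length L" for k
      proof -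
        have "L ! k < d" using L that nth_mem by blast
        then show ?thesis using measurable_sets[OF Xmeas[of "L ! k"], of "{y ! k}"] by simp
      qed
      then show ?thesis by (intro sets.Diff sets.finite_UN) auto
    qed
    finally show ?thesis .
  qed
qed

abbreviation "Xv \<equiv> rvec d X"
abbreviation "Xm i \<equiv> rvec_minus d X i"

lemma Xv_meas[measurable]: "Xv \<in> measurable M (count_space UNIV)"
  unfolding rvec_def[abs_def] by (rule meas_list) auto

lemma Xm_meas[measurable]: "Xm i \<in> measurable M (count_space UNIV)"
  unfolding rvec_minus_def[abs_def] by (rule meas_list) auto

lemma X_meas'[measurable]: "i < d \<Longrightarrow> X i \<in> measurable M (count_space UNIV)"
  by (rule Xmeas)

definition "F = Xv ` space M"
definition "Ev x = {\<omega> \<in> space M. Xv \<omega> = x}"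
definition "P x = measure M (Ev x)"

lemma Ev_sets[measurable]: "Ev x \<in> sets M"
  unfolding Ev_def by measurable

lemma finite_F: "finite F"
proof -
  have "F \<subseteq> {xs. set xs \<subseteq> (\<Union>i<d. S i) \<and> length xs = d}"
    using XS by (force simp: F_def rvec_def)
  moreover have "finite {xs. set xs \<subseteq> (\<Union>i<d. S i) \<and> length xs = d}"
    by (rule finite_lists_length_eq) (auto intro: finS)
  ultimately show ?thesis by (rule finite_subset)
qed

lemma F_props: "x \<in> F \<Longrightarrow> length x = d \<and> (\<forall>i<d. x ! i \<in> S i)"
  using XS by (auto simp: F_def rvec_def)

end

context dtc begin

lemma integrable_ind[simp, intro]: "A \<in> sets M \<Longrightarrow> integrable M (indicator A :: 'a \<Rightarrow> real)"
  by (rule integrable_const_bound[where B=1]) (auto simp: indicator_def)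

definition "G = vimage_algebra (space M) W N"

lemma W_funcset: "W \<in> space M \<rightarrow> space N"
  using Wmeas by (auto simp: measurable_def)

lemma sets_G: "sets G = {W -` B \<inter> space M | B. B \<in> sets N}"
  unfolding G_def by (rule sets_vimage_algebra2[OF W_funcset])

lemma subalgG: "subalgebra M G"
  unfolding subalgebra_def G_def
  using sets_image_in_sets[OF refl Wmeas] by auto

sublocale cG: finite_measure_subalgebra M G
  by unfold_locales (rule subalgG)

lemma W_meas_G: "W \<in> measurable G N"
  unfolding G_def by (rule measurable_vimage_algebra1[OF W_funcset])

definition "nuW = distr M N W"
definition "nux x = distr (density M (indicator (Ev x))) N W"

lemma prob_nuW: "prob_space nuW"
  unfolding nuW_def by (rule prob_space_distr) simp

lemma sets_nuW[simp]: "sets nuW = sets N" and space_nuW[simp]: "space nuW = space N"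
  by (simp_all add: nuW_def)

lemma sets_nux[simp]: "sets (nux x) = sets N"
  by (simp add: nux_def)

lemma W_meas_dens: "W \<in> measurable (density M (indicator (Ev x))) N"
  by (subst measurable_cong_sets[of _ M N N]) simp_all

lemma emeasure_nux:
  assumes "B \<in> sets N"
  shows "emeasure (nux x) B = emeasure M (Ev x \<inter> (W -` B \<inter> space M))"
proof -
  have "emeasure (nux x) B = emeasure (density M (indicator (Ev x))) (W -` B \<inter> space (density M (indicator (Ev x))))"
    unfolding nux_def by (rule emeasure_distr[OF W_meas_dens assms])
  also have "\<dots> = emeasure M (Ev x \<inter> (W -` B \<inter> space M))"
    using assms by (simp add: emeasure_restricted measurable_sets[OF Wmeas])
  finally show ?thesis .
qed

lemma emeasure_nuW:
  assumes "B \<in> sets N"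
  shows "emeasure nuW B = emeasure M (W -` B \<inter> space M)"
  unfolding nuW_def by (rule emeasure_distr[OF Wmeas assms])

lemma ac_nux: "absolutely_continuous nuW (nux x)"
  unfolding absolutely_continuous_def
proof
  fix B assume "B \<in> null_sets nuW"
  then have B0: "B \<in> sets N" "emeasure nuW B = 0" by auto
  then have B: "B \<in> sets N" "emeasure M (W -` B \<inter> space M) = 0"
    using emeasure_nuW[OF B0(1)] by auto
  have "emeasure M (Ev x \<inter> (W -` B \<inter> space M)) \<le> emeasure M (W -` B \<inter> space M)"
    by (rule emeasure_mono) (use B measurable_sets[OF Wmeas] in auto)
  then have "emeasure (nux x) B \<le> emeasure M (W -` B \<inter> space M)"
    using B by (simp add: emeasure_nux)
  then show "B \<in> null_sets (nux x)" using B by auto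
qed

lemma finite_nux: "finite_measure (nux x)"
proof
  have sp: "space (nux x) = space N" by (simp add: nux_def)
  have "emeasure (nux x) (space (nux x)) = emeasure M (Ev x \<inter> (W -` space N \<inter> space M))"
    unfolding sp by (rule emeasure_nux) simp
  also have "\<dots> \<noteq> \<infinity>" by simp
  finally show "emeasure (nux x) (space (nux x)) \<noteq> \<infinity>" .
qed

definition "RNx x = RN_deriv nuW (nux x)"
definition "Gx x w = enn2real (RNx x w)"

lemma meas_nuW[simp]: "measurable nuW K = measurable N K"
  by (rule measurable_cong_sets) simp_all

lemma RNx_meas[measurable]: "RNx x \<in> borel_measurable N"
proof -
  have "RN_deriv nuW (nux x) \<in> borel_measurable nuW" by (rule borel_measurable_RN_deriv)
  then show ?thesis unfolding RNx_def by simp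
qed

lemma Gx_meas[measurable]: "Gx x \<in> borel_measurable N"
  unfolding Gx_def[abs_def] by measurable

lemma Gx_nonneg: "0 \<le> Gx x w"
  by (simp add: Gx_def)

lemma density_RNx: "density nuW (RNx x) = nux x"
  unfolding RNx_def
  by (rule sigma_finite_measure.density_RN_deriv)
     (use prob_nuW ac_nux in \<open>auto simp: prob_space_imp_sigma_finite\<close>)

lemma density_Gx: "density nuW (\<lambda>w. ennreal (Gx x w)) = nux x"
proof -
  have "AE w in nuW. RNx x w \<noteq> \<infinity>"
    unfolding RNx_def
    by (rule sigma_finite_measure.RN_deriv_finite)
       (use prob_nuW ac_nux finite_nux in \<open>auto simp: prob_space_imp_sigma_finite finite_measure.sigma_finite_measure\<close>)
  then have "AE w in nuW. ennreal (Gx x w) = RNx x w"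
    by eventually_elim (auto simp: Gx_def less_top)
  then have "density nuW (\<lambda>w. ennreal (Gx x w)) = density nuW (RNx x)"
    by (intro density_cong) auto
  then show ?thesis using density_RNx by simp
qed

lemma integrable_Gx: "integrable nuW (Gx x)"
proof (rule integrableI_nonneg)
  show "AE w in nuW. 0 \<le> Gx x w" by (simp add: Gx_nonneg)
  have "emeasure (density nuW (\<lambda>w. ennreal (Gx x w))) (space nuW) = (\<integral>\<^sup>+ w. ennreal (Gx x w) * indicator (space nuW) w \<partial>nuW)"
    by (rule emeasure_density) auto
  also have "\<dots> = (\<integral>\<^sup>+ w. ennreal (Gx x w) \<partial>nuW)"
    by (intro nn_integral_cong) simp
  finally have "(\<integral>\<^sup>+ w. ennreal (Gx x w) \<partial>nuW) = emeasure (density nuW (\<lambda>w. ennreal (Gx x w))) (space nuW)" ..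
  also have "\<dots> = emeasure (nux x) (space N)" by (simp add: density_Gx)
  also have "\<dots> < \<infinity>" using finite_measure.emeasure_finite[OF finite_nux, of x "space N"] by (simp add: less_top)
  finally show "(\<integral>\<^sup>+ w. ennreal (Gx x w) \<partial>nuW) < \<infinity>" .
qed simp

lemma int_Gx:
  assumes B: "B \<in> sets N"
  shows "(\<integral>w. indicator B w * Gx x w \<partial>nuW) = measure M (Ev x \<inter> (W -` B \<inter> space M))"
proof -
  have int: "integrable nuW (\<lambda>w. indicator B w * Gx x w)"
    using integrable_mult_indicator[of B nuW "Gx x"] B integrable_Gx by simp
  have "ennreal (\<integral>w. indicator B w * Gx x w \<partial>nuW) = (\<integral>\<^sup>+ w. ennreal (indicator B w * Gx x w) \<partial>nuW)"
    by (rule nn_integral_eq_integral[symmetric]) (use int Gx_nonneg in auto)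
  also have "\<dots> = (\<integral>\<^sup>+ w. ennreal (Gx x w) * indicator B w \<partial>nuW)"
    by (intro nn_integral_cong) (auto simp: indicator_def)
  also have "\<dots> = emeasure (density nuW (\<lambda>w. ennreal (Gx x w))) B"
    using B by (simp add: emeasure_density)
  also have "\<dots> = emeasure M (Ev x \<inter> (W -` B \<inter> space M))"
    using B by (simp add: density_Gx emeasure_nux)
  also have "\<dots> = ennreal (measure M (Ev x \<inter> (W -` B \<inter> space M)))"
    by (simp add: emeasure_eq_measure)
  finally show ?thesis
    by (subst (asm) ennreal_inj) (auto intro!: integral_nonneg_AE simp: Gx_nonneg)
qed

definition "q x = real_cond_exp M G (indicator (Ev x))"

lemma integrable_GxW: "integrable M (\<lambda>\<omega>. Gx x (W \<omega>))"
  using integrable_Gx unfolding nuW_def by (subst (asm) integrable_distr_eq) auto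

lemma GxW_meas_G: "(\<lambda>\<omega>. Gx x (W \<omega>)) \<in> borel_measurable G"
  using W_meas_G by measurable

lemma q_eq_GxW: "AE \<omega> in M. q x \<omega> = Gx x (W \<omega>)"
  unfolding q_def
proof (rule cG.real_cond_exp_charact)
  fix A assume "A \<in> sets G"
  then obtain B where B: "B \<in> sets N" "A = W -` B \<inter> space M" using sets_G by auto
  have "(\<integral>\<omega>\<in>A. indicator (Ev x) \<omega> \<partial>M) = (\<integral>\<omega>. indicator (Ev x \<inter> (W -` B \<inter> space M)) \<omega> \<partial>M)"
    unfolding set_lebesgue_integral_def using B by (intro Bochner_Integration.integral_cong refl) (auto simp: indicator_def)
  also have "\<dots> = measure M (Ev x \<inter> (W -` B \<inter> space M))"
  proof -
    have "Ev x \<inter> (W -` B \<inter> space M) \<inter> space M = Ev x \<inter> (W -` B \<inter> space M)" by auto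
    then show ?thesis by (simp only: Bochner_Integration.integral_indicator)
  qed
  also have "\<dots> = (\<integral>w. indicator B w * Gx x w \<partial>nuW)" using int_Gx[OF B(1)] by simp
  also have "\<dots> = (\<integral>\<omega>. indicator B (W \<omega>) * Gx x (W \<omega>) \<partial>M)"
    unfolding nuW_def using B by (subst integral_distr) auto
  also have "\<dots> = (\<integral>\<omega>\<in>A. Gx x (W \<omega>) \<partial>M)"
    unfolding set_lebesgue_integral_def using B by (intro Bochner_Integration.integral_cong refl) (auto simp: indicator_def)
  finally show "(\<integral>\<omega>\<in>A. indicator (Ev x) \<omega> \<partial>M) = (\<integral>\<omega>\<in>A. Gx x (W \<omega>) \<partial>M)" .
next
  show "integrable M (indicator (Ev x) :: 'a \<Rightarrow> real)" by (simp add: Ev_sets)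
  show "integrable M (\<lambda>\<omega>. Gx x (W \<omega>))" by (rule integrable_GxW)
  show "(\<lambda>\<omega>. Gx x (W \<omega>)) \<in> borel_measurable G" by (rule GxW_meas_G)
qed

end

context dtc begin

lemma q_bounds: "AE \<omega> in M. 0 \<le> q x \<omega> \<and> q x \<omega> \<le> 1"
proof -
  have "AE \<omega> in M. 0 \<le> q x \<omega>" unfolding q_def
    by (rule cG.real_cond_exp_ge_c) (auto simp: Ev_sets)
  moreover have "AE \<omega> in M. q x \<omega> \<le> 1" unfolding q_def
    by (rule cG.real_cond_exp_le_c) (auto simp: Ev_sets indicator_def)
  ultimately show ?thesis by eventually_elim auto
qed

lemma Gx_le1: "AE w in nuW. Gx x w \<le> 1"
proof -
  have "AE \<omega> in M. Gx x (W \<omega>) \<le> 1"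
    using q_bounds[of x] q_eq_GxW[of x] by eventually_elim auto
  then show ?thesis unfolding nuW_def
    by (subst AE_distr_iff) auto
qed

definition "g x w = min 1 (Gx x w)"
definition "Q x \<omega> = g x (W \<omega>)"

lemma g_meas[measurable]: "g x \<in> borel_measurable N"
  unfolding g_def[abs_def] by measurable

lemma Q_meas[measurable]: "Q x \<in> borel_measurable M"
  unfolding Q_def[abs_def] by measurable

lemma Q_meas_G: "Q x \<in> borel_measurable G"
  unfolding Q_def[abs_def] using W_meas_G by measurable

lemma g_bounds: "0 \<le> g x w" "g x w \<le> 1"
  by (auto simp: g_def Gx_nonneg)

lemma Q_bounds: "0 \<le> Q x \<omega>" "Q x \<omega> \<le> 1"
  by (auto simp: Q_def g_bounds)

lemma g_eq_Gx: "AE w in nuW. g x w = Gx x w"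
  using Gx_le1[of x] by eventually_elim (auto simp: g_def)

lemma q_eq_Q: "AE \<omega> in M. q x \<omega> = Q x \<omega>"
  using q_bounds[of x] q_eq_GxW[of x] by eventually_elim (auto simp: g_def Q_def)

lemma int_g:
  assumes B: "B \<in> sets N"
  shows "(\<integral>w. indicator B w * g x w \<partial>nuW) = measure M (Ev x \<inter> (W -` B \<inter> space M))"
proof -
  have "(\<integral>w. indicator B w * g x w \<partial>nuW) = (\<integral>w. indicator B w * Gx x w \<partial>nuW)"
    by (rule integral_cong_AE) (use g_eq_Gx[of x] B in auto)
  then show ?thesis using int_Gx[OF B] by simp
qed

lemma integrable_Q[simp, intro]: "integrable M (Q x)"
  by (rule integrable_const_bound[where B=1]) (auto simp: Q_bounds abs_le_iff intro: order_trans[OF _ Q_bounds(2)] order_trans[OF Q_bounds(1)])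

lemma int_Q:
  assumes B: "B \<in> sets N"
  shows "(\<integral>\<omega>. indicator B (W \<omega>) * Q x \<omega> \<partial>M) = measure M (Ev x \<inter> (W -` B \<inter> space M))"
proof -
  have "(\<integral>\<omega>. indicator B (W \<omega>) * Q x \<omega> \<partial>M) = (\<integral>w. indicator B w * g x w \<partial>nuW)"
    unfolding nuW_def Q_def using B by (subst integral_distr) auto
  then show ?thesis using int_g[OF B] by simp
qed

lemma int_Q_P: "(\<integral>\<omega>. Q x \<omega> \<partial>M) = P x"
proof -
  have "(\<integral>\<omega>. Q x \<omega> \<partial>M) = (\<integral>\<omega>. indicator (space N) (W \<omega>) * Q x \<omega> \<partial>M)"
    by (intro Bochner_Integration.integral_cong refl) (use W_funcset in \<open>auto simp: indicator_def\<close>)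
  also have "\<dots> = measure M (Ev x \<inter> (W -` space N \<inter> space M))" by (rule int_Q) simp
  also have "Ev x \<inter> (W -` space N \<inter> space M) = Ev x" using W_funcset by (auto simp: Ev_def)
  finally show ?thesis by (simp add: P_def)
qed

lemma ind_sum:
  assumes "\<omega> \<in> space M"
  shows "indicator {\<omega> \<in> space M. Xv \<omega> \<in> C} \<omega> = (\<Sum>x\<in>F \<inter> C. indicator (Ev x) \<omega> :: real)"
proof -
  have "(\<Sum>x\<in>F \<inter> C. indicator (Ev x) \<omega> :: real) = (\<Sum>x\<in>F \<inter> C. if Xv \<omega> = x then 1 else 0)"
    using assms by (intro sum.cong) (auto simp: Ev_def indicator_def)
  also have "\<dots> = (if Xv \<omega> \<in> F \<inter> C then 1 else 0)"
    using finite_F by (simp add: sum.delta)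
  finally show ?thesis using assms by (auto simp: indicator_def F_def)
qed

lemma set_Xv_sets[measurable]: "{\<omega> \<in> space M. Xv \<omega> \<in> C} \<in> sets M"
proof -
  have "{\<omega> \<in> space M. Xv \<omega> \<in> C} = Xv -` C \<inter> space M" by auto
  then show ?thesis using measurable_sets[OF Xv_meas, of C] by simp
qed

lemma ce_set: "AE \<omega> in M. real_cond_exp M G (indicator {\<omega> \<in> space M. Xv \<omega> \<in> C}) \<omega> = (\<Sum>x\<in>F \<inter> C. Q x \<omega>)"
proof -
  have "AE \<omega> in M. real_cond_exp M G (indicator {\<omega> \<in> space M. Xv \<omega> \<in> C}) \<omega>
      = real_cond_exp M G (\<lambda>\<omega>. \<Sum>x\<in>F \<inter> C. indicator (Ev x) \<omega>) \<omega>"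
    by (rule cG.real_cond_exp_cong) (auto simp: ind_sum)
  moreover have "AE \<omega> in M. real_cond_exp M G (\<lambda>\<omega>. \<Sum>x\<in>F \<inter> C. indicator (Ev x) \<omega>) \<omega>
      = (\<Sum>x\<in>F \<inter> C. real_cond_exp M G (indicator (Ev x)) \<omega>)"
    by (rule cG.real_cond_exp_sum) (simp add: Ev_sets)
  moreover have "AE \<omega> in M. \<forall>x\<in>F \<inter> C. q x \<omega> = Q x \<omega>"
    by (rule AE_finite_allI) (use finite_F q_eq_Q in auto)
  ultimately show ?thesis by eventually_elim (simp add: q_def)
qed

lemma sum_Q_1: "AE \<omega> in M. (\<Sum>x\<in>F. Q x \<omega>) = 1"
proof -
  have "AE \<omega> in M. real_cond_exp M G (indicator {\<omega> \<in> space M. Xv \<omega> \<in> UNIV}) \<omega> = indicator {\<omega> \<in> space M. Xv \<omega> \<in> UNIV} \<omega>"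
  proof (rule cG.real_cond_exp_F_meas)
    show "integrable M (indicator {\<omega> \<in> space M. Xv \<omega> \<in> UNIV} :: _ \<Rightarrow> real)" by simp
    have "{\<omega> \<in> space M. Xv \<omega> \<in> UNIV} = space G" by (simp add: G_def)
    then show "(indicator {\<omega> \<in> space M. Xv \<omega> \<in> UNIV} :: _ \<Rightarrow> real) \<in> borel_measurable G"
      by (metis borel_measurable_indicator sets.top)
  qed
  then show ?thesis using ce_set[of UNIV] AE_space by eventually_elim (auto simp: indicator_def)
qed

end

lemma xlogx_bound:
  assumes b: "1 < b" and r: "0 \<le> r" "r \<le> 1"
  shows "\<bar>r * log b r\<bar> \<le> 1 / ln b"
proof (cases "r = 0")
  case True then show ?thesis using b by simp
next
  case False
  then have rp: "0 < r" using r by simp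
  have lnb: "0 < ln b" using b by simp
  have l0: "log b r \<le> 0" using rp r b by simp
  have "log b (1 / r) \<le> (1 / r - 1) / ln b"
  proof -
    have "ln (1/r) \<le> 1/r - 1" using ln_le_minus_one[of "1/r"] rp by simp
    then show ?thesis unfolding log_def using lnb by (simp add: divide_right_mono)
  qed
  then have h: "- log b r \<le> (1 / r - 1) / ln b" using rp b by (simp add: log_divide)
  have "r * (- log b r) \<le> r * ((1 / r - 1) / ln b)" by (rule mult_left_mono[OF h]) (use rp in simp)
  also have "\<dots> = (1 - r) / ln b" using rp lnb by (simp add: field_simps)
  also have "\<dots> \<le> 1 / ln b" using lnb rp by (simp add: divide_right_mono)
  finally have "- (r * log b r) \<le> 1 / ln b" by simp
  moreover have "r * log b r \<le> 0" using rp l0 by (simp add: mult_nonneg_nonpos)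
  ultimately show ?thesis by simp
qed

lemma tangent_pointwise:
  assumes b: "1 < b" and r: "0 \<le> r" and s: "0 \<le> s" and m: "0 < m"
  shows "r * s * log b m + (r * s - m * s) / ln b \<le> r * s * log b r"
proof (cases "r = 0")
  case True
  have "0 \<le> m * s" using m s by simp
  then show ?thesis using True b by (simp add: divide_nonpos_pos)
next
  case False
  then have rp: "0 < r" using r by simp
  have lnb: "0 < ln b" using b by simp
  have "log b (m / r) \<le> (m / r - 1) / ln b"
  proof -
    have "ln (m/r) \<le> m/r - 1" using ln_le_minus_one[of "m/r"] rp m by simp
    then show ?thesis unfolding log_def using lnb by (simp add: divide_right_mono)
  qed
  then have h: "log b m - log b r \<le> (m / r - 1) / ln b" using rp m b by (simp add: log_divide)
  have "r * (log b m - log b r) \<le> r * ((m / r - 1) / ln b)" by (rule mult_left_mono[OF h]) (use rp in simp)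
  also have "\<dots> = (m - r) / ln b" using rp lnb by (simp add: field_simps)
  finally have h2: "r * log b m - r * log b r \<le> (m - r) / ln b" by (simp add: algebra_simps)
  have "s * (r * log b m - r * log b r) \<le> s * ((m - r) / ln b)" by (rule mult_left_mono[OF h2 s])
  then show ?thesis by (simp add: algebra_simps add_divide_distrib diff_divide_distrib)
qed

lemma (in prob_space) jensen_step:
  fixes q r s :: "'a \<Rightarrow> real"
  assumes b: "1 < b"
    and [measurable]: "q \<in> borel_measurable M" "r \<in> borel_measurable M" "s \<in> borel_measurable M"
    and qrs: "AE \<omega> in M. q \<omega> = r \<omega> * s \<omega>"
    and rb: "AE \<omega> in M. 0 \<le> r \<omega> \<and> r \<omega> \<le> 1"
    and sb: "AE \<omega> in M. 0 \<le> s \<omega> \<and> s \<omega> \<le> 1"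
    and p: "(\<integral>\<omega>. q \<omega> \<partial>M) = p" and ps: "(\<integral>\<omega>. s \<omega> \<partial>M) = ps" and pps: "p \<le> ps"
  shows "p * log b (p / ps) \<le> (\<integral>\<omega>. q \<omega> * log b (r \<omega>) \<partial>M)"
proof -
  have lnb: "0 < ln b" using b by simp
  have qb: "AE \<omega> in M. 0 \<le> q \<omega> \<and> q \<omega> \<le> 1"
    using qrs rb sb by eventually_elim (auto intro: mult_le_one)
  have intq: "integrable M q"
  proof (rule integrable_const_bound[where B=1])
    show "AE \<omega> in M. norm (q \<omega>) \<le> 1" using qb by eventually_elim auto
  qed simp
  have ints: "integrable M s"
  proof (rule integrable_const_bound[where B=1])
    show "AE \<omega> in M. norm (s \<omega>) \<le> 1" using sb by eventually_elim auto
  qed simp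
  have intql: "integrable M (\<lambda>\<omega>. q \<omega> * log b (r \<omega>))"
  proof (rule integrable_const_bound[where B="1 / ln b"])
    show "AE \<omega> in M. norm (q \<omega> * log b (r \<omega>)) \<le> 1 / ln b"
      using qrs rb sb
    proof eventually_elim
      case (elim \<omega>)
      have "\<bar>q \<omega> * log b (r \<omega>)\<bar> = s \<omega> * \<bar>r \<omega> * log b (r \<omega>)\<bar>"
        using elim by (simp add: abs_mult)
      also have "\<dots> \<le> 1 * \<bar>r \<omega> * log b (r \<omega>)\<bar>"
        using elim by (intro mult_right_mono) auto
      also have "\<dots> \<le> 1 / ln b" using xlogx_bound[OF b] elim by simp
      finally show ?case by simp
    qed
  qed simp
  show ?thesis
  proof (cases "p = 0")
    case True
    have "AE \<omega> in M. q \<omega> = 0"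
      using integral_nonneg_eq_0_iff_AE[OF intq] qb p True by (auto elim!: eventually_mono)
    then have "(\<integral>\<omega>. q \<omega> * log b (r \<omega>) \<partial>M) = (\<integral>\<omega>. 0 \<partial>M)"
      by (intro integral_cong_AE) (auto elim!: eventually_mono)
    then show ?thesis using True by simp
  next
    case False
    have p0: "0 \<le> p" using p qb by (auto intro!: integral_nonneg_AE elim!: eventually_mono)
    then have pp: "0 < p" using False by simp
    then have psp: "0 < ps" using pps by simp
    define m where "m = p / ps"
    have mp: "0 < m" using pp psp by (simp add: m_def)
    have "(\<integral>\<omega>. q \<omega> * log b m + (q \<omega> - m * s \<omega>) / ln b \<partial>M) \<le> (\<integral>\<omega>. q \<omega> * log b (r \<omega>) \<partial>M)"
    proof (rule integral_mono_AE)
      show "integrable M (\<lambda>\<omega>. q \<omega> * log b m + (q \<omega> - m * s \<omega>) / ln b)"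
        using intq ints by auto
      show "integrable M (\<lambda>\<omega>. q \<omega> * log b (r \<omega>))" by (rule intql)
      show "AE \<omega> in M. q \<omega> * log b m + (q \<omega> - m * s \<omega>) / ln b \<le> q \<omega> * log b (r \<omega>)"
        using qrs rb sb
      proof eventually_elim
        case (elim \<omega>)
        then show ?case using tangent_pointwise[OF b _ _ mp, of "r \<omega>" "s \<omega>"] by simp
      qed
    qed
    moreover have "(\<integral>\<omega>. q \<omega> * log b m + (q \<omega> - m * s \<omega>) / ln b \<partial>M) = p * log b m + (p - m * ps) / ln b"
      using intq ints p ps by (simp add: integral_add integral_diff integral_divide_zero)
    moreover have "p - m * ps = 0" using psp by (simp add: m_def)
    ultimately show ?thesis by (simp add: m_def)
  qed
qed

context dtc begin

definition "mi i x = map (\<lambda>j. x ! j) (filter (\<lambda>j. j \<noteq> i) [0..<d])"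

lemma Xm_eq: "Xm i \<omega> = mi i (Xv \<omega>)"
  by (auto simp: rvec_minus_def rvec_def mi_def)

lemma X_eq: "i < d \<Longrightarrow> X i \<omega> = Xv \<omega> ! i"
  by (simp add: rvec_def)

lemma phi_inj:
  assumes i: "i < d" and len: "length x = d" "length y = d"
    and eq: "x ! i = y ! i" "mi i x = mi i y"
  shows "x = y"
proof (rule nth_equalityI)
  show "length x = length y" using len by simp
  fix j assume j: "j < length x"
  show "x ! j = y ! j"
  proof (cases "j = i")
    case True then show ?thesis using eq by simp
  next
    case False
    then have "j \<in> set (filter (\<lambda>j. j \<noteq> i) [0..<d])" using j len by auto
    then show ?thesis using eq(2) unfolding mi_def by (simp add: map_eq_conv)
  qed
qed

definition "r i a = real_cond_exp M G (indicator {\<omega> \<in> space M. X i \<omega> \<in> {a}})"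
definition "s i y = real_cond_exp M G (indicator {\<omega> \<in> space M. Xm i \<omega> \<in> {y}})"
definition "Pm i y = measure M {\<omega> \<in> space M. Xm i \<omega> = y}"

lemma Xi_set_eq: "i < d \<Longrightarrow> {\<omega> \<in> space M. X i \<omega> \<in> {a}} = {\<omega> \<in> space M. Xv \<omega> \<in> {x. x ! i = a}}"
  by (auto simp: X_eq)

lemma Xm_set_eq: "{\<omega> \<in> space M. Xm i \<omega> \<in> {y}} = {\<omega> \<in> space M. Xv \<omega> \<in> {x. mi i x = y}}"
  by (auto simp: Xm_eq)

lemma Xi_sets[measurable]: "i < d \<Longrightarrow> {\<omega> \<in> space M. X i \<omega> \<in> {a}} \<in> sets M"
  by (simp add: Xi_set_eq)

lemma Xm_sets[measurable]: "{\<omega> \<in> space M. Xm i \<omega> \<in> {y}} \<in> sets M"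
  by (simp add: Xm_set_eq)

lemma r_sum: assumes i: "i < d" shows "AE \<omega> in M. r i a \<omega> = (\<Sum>x\<in>F \<inter> {x. x ! i = a}. Q x \<omega>)"
  unfolding r_def Xi_set_eq[OF i] by (rule ce_set)

lemma Xm_sets2[measurable]: "{\<omega> \<in> space M. Xm i \<omega> = y} \<in> sets M"
  using Xm_sets[of i y] by simp

lemma ce_bounds:
  assumes "A \<in> sets M"
  shows "AE \<omega> in M. 0 \<le> real_cond_exp M G (indicator A) \<omega> \<and> real_cond_exp M G (indicator A) \<omega> \<le> 1"
proof -
  have "AE \<omega> in M. 0 \<le> real_cond_exp M G (indicator A) \<omega>"
    by (rule cG.real_cond_exp_ge_c) (auto simp: assms)
  moreover have "AE \<omega> in M. real_cond_exp M G (indicator A) \<omega> \<le> 1"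
    by (rule cG.real_cond_exp_le_c) (auto simp: assms indicator_def)
  ultimately show ?thesis by eventually_elim auto
qed

lemma r_bounds: "i < d \<Longrightarrow> AE \<omega> in M. 0 \<le> r i a \<omega> \<and> r i a \<omega> \<le> 1"
  unfolding r_def by (rule ce_bounds) simp

lemma s_bounds: "AE \<omega> in M. 0 \<le> s i y \<omega> \<and> s i y \<omega> \<le> 1"
  unfolding s_def by (rule ce_bounds) simp

lemma r_meas[measurable]: "r i a \<in> borel_measurable M"
  unfolding r_def by simp

lemma s_meas[measurable]: "s i y \<in> borel_measurable M"
  unfolding s_def by simp

lemma int_s: "(\<integral>\<omega>. s i y \<omega> \<partial>M) = Pm i y"
proof -
  have "(\<integral>\<omega>. s i y \<omega> \<partial>M) = (\<integral>\<omega>. indicator {\<omega> \<in> space M. Xm i \<omega> \<in> {y}} \<omega> \<partial>M)"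
    unfolding s_def by (rule cG.real_cond_exp_int(2)) simp
  also have "\<dots> = Pm i y" unfolding Pm_def
    by (simp only: Bochner_Integration.integral_indicator) (auto intro!: arg_cong[where f="measure M"])
  finally show ?thesis .
qed

lemma P_le_Pm:
  assumes "x \<in> F" shows "P x \<le> Pm i (mi i x)"
  unfolding P_def Pm_def
  by (rule finite_measure_mono[OF _ Xm_sets2]) (auto simp: Ev_def Xm_eq)

lemma Q_rs:
  assumes CI: "cond_indep_given M N W (X i) (Xm i)" and i: "i < d" and x: "x \<in> F"
  shows "AE \<omega> in M. Q x \<omega> = r i (x ! i) \<omega> * s i (mi i x) \<omega>"
proof -
  have set_eq: "{\<omega> \<in> space M. X i \<omega> \<in> {x ! i} \<and> Xm i \<omega> \<in> {mi i x}} = {\<omega> \<in> space M. Xv \<omega> \<in> {x}}"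
  proof -
    have lx: "length x = d" using F_props[OF x] by simp
    have lw: "length (Xv \<omega>) = d" for \<omega> by (simp add: rvec_def)
    have "(X i \<omega> = x ! i \<and> Xm i \<omega> = mi i x) \<longleftrightarrow> Xv \<omega> = x" for \<omega>
    proof
      assume h: "X i \<omega> = x ! i \<and> Xm i \<omega> = mi i x"
      show "Xv \<omega> = x"
        by (rule phi_inj[OF i lw lx]) (use h in \<open>simp_all add: X_eq[OF i] Xm_eq\<close>)
    next
      assume "Xv \<omega> = x"
      then show "X i \<omega> = x ! i \<and> Xm i \<omega> = mi i x" by (simp add: X_eq[OF i] Xm_eq)
    qed
    then show ?thesis by auto
  qed
  have "AE \<omega> in M. real_cond_exp M G (indicator {\<omega> \<in> space M. X i \<omega> \<in> {x ! i} \<and> Xm i \<omega> \<in> {mi i x}}) \<omega>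
      = r i (x ! i) \<omega> * s i (mi i x) \<omega>"
    using CI unfolding cond_indep_given_def r_def s_def G_def by blast
  moreover have "AE \<omega> in M. real_cond_exp M G (indicator {\<omega> \<in> space M. Xv \<omega> \<in> {x}}) \<omega> = (\<Sum>x'\<in>F \<inter> {x}. Q x' \<omega>)"
    by (rule ce_set)
  ultimately show ?thesis by eventually_elim (use x in \<open>simp only: set_eq, simp\<close>)
qed

lemma integrable_Qlog[simp, intro]: "integrable M (\<lambda>\<omega>. Q x \<omega> * log b (Q x \<omega>))"
proof (rule integrable_const_bound[where B="1 / ln b"])
  show "AE \<omega> in M. norm (Q x \<omega> * log b (Q x \<omega>)) \<le> 1 / ln b"
    using xlogx_bound[OF b Q_bounds] by simp
qed simp

lemma core:
  assumes CI: "\<And>i. i < d \<Longrightarrow> cond_indep_given M N W (X i) (Xm i)"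
  shows "(\<Sum>i<d. \<Sum>x\<in>F. P x * log b (P x / Pm i (mi i x)))
         \<le> (\<integral>\<omega>. (\<Sum>x\<in>F. Q x \<omega> * log b (Q x \<omega>)) \<partial>M)"
proof -
  have lnb: "0 < ln b" using b by simp
  have intQr: "integrable M (\<lambda>\<omega>. Q x \<omega> * log b (r i (x ! i) \<omega>))" if i: "i < d" and x: "x \<in> F" for i x
  proof (rule integrable_const_bound[where B="1 / ln b"])
    show "AE \<omega> in M. norm (Q x \<omega> * log b (r i (x ! i) \<omega>)) \<le> 1 / ln b"
      using Q_rs[OF CI[OF i] i x] r_bounds[OF i, of "x ! i"] s_bounds[of i "mi i x"]
    proof eventually_elim
      case (elim \<omega>)
      have "\<bar>Q x \<omega> * log b (r i (x ! i) \<omega>)\<bar> = s i (mi i x) \<omega> * \<bar>r i (x ! i) \<omega> * log b (r i (x ! i) \<omega>)\<bar>"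
        using elim by (simp add: abs_mult)
      also have "\<dots> \<le> 1 * \<bar>r i (x ! i) \<omega> * log b (r i (x ! i) \<omega>)\<bar>"
        using elim by (intro mult_right_mono) auto
      also have "\<dots> \<le> 1 / ln b" using xlogx_bound[OF b] elim by simp
      finally show ?case by simp
    qed
  qed simp
  have step2: "P x * log b (P x / Pm i (mi i x)) \<le> (\<integral>\<omega>. Q x \<omega> * log b (r i (x ! i) \<omega>) \<partial>M)"
    if i: "i < d" and x: "x \<in> F" for i x
    by (rule jensen_step[OF b _ _ _ Q_rs[OF CI[OF i] i x] r_bounds[OF i] s_bounds int_Q_P int_s P_le_Pm[OF x]])
       simp_all
  have "(\<Sum>i<d. \<Sum>x\<in>F. P x * log b (P x / Pm i (mi i x)))
        \<le> (\<Sum>i<d. \<Sum>x\<in>F. (\<integral>\<omega>. Q x \<omega> * log b (r i (x ! i) \<omega>) \<partial>M))"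
    by (intro sum_mono step2) auto
  also have "\<dots> = (\<integral>\<omega>. (\<Sum>i<d. \<Sum>x\<in>F. Q x \<omega> * log b (r i (x ! i) \<omega>)) \<partial>M)"
    using intQr by (simp add: integral_sum integrable_sum)
  also have "\<dots> \<le> (\<integral>\<omega>. (\<Sum>x\<in>F. Q x \<omega> * log b (Q x \<omega>)) \<partial>M)"
  proof (rule integral_mono_AE)
    show "integrable M (\<lambda>\<omega>. \<Sum>i<d. \<Sum>x\<in>F. Q x \<omega> * log b (r i (x ! i) \<omega>))"
      by (intro Bochner_Integration.integrable_sum intQr) auto
    show "integrable M (\<lambda>\<omega>. \<Sum>x\<in>F. Q x \<omega> * log b (Q x \<omega>))" by (simp add: integrable_sum)
    have "AE \<omega> in M. \<forall>i\<in>{..<d}. \<forall>x\<in>F. r i (x ! i) \<omega> = (\<Sum>x'\<in>F \<inter> {x'. x' ! i = x ! i}. Q x' \<omega>)"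
      by (intro AE_finite_allI finite_F r_sum) auto
    then show "AE \<omega> in M. (\<Sum>i<d. \<Sum>x\<in>F. Q x \<omega> * log b (r i (x ! i) \<omega>)) \<le> (\<Sum>x\<in>F. Q x \<omega> * log b (Q x \<omega>))"
      using sum_Q_1
    proof eventually_elim
      case (elim \<omega>)
      define R where "R = (\<lambda>i a. (\<Sum>x'\<in>{x'\<in>F. x' ! i = a}. Q x' \<omega>))"
      have "(\<Sum>i<d. \<Sum>x\<in>F. Q x \<omega> * log b (r i (x ! i) \<omega>)) = (\<Sum>i<d. \<Sum>x\<in>F. Q x \<omega> * log b (R i (x ! i)))"
        using elim(1) unfolding R_def by (intro sum.cong refl) (auto simp: Int_def conj_commute)
      also have "\<dots> \<le> (\<Sum>x\<in>F. Q x \<omega> * log b (Q x \<omega>))"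
        by (rule subadditivity_pointwise[OF b finite_F F_props finS])
           (use elim(2) Q_bounds in \<open>auto simp: R_def\<close>)
      finally show ?case .
    qed
  qed
  finally show ?thesis .
qed

end

lemma integral_pair_product:
  fixes \<phi> :: "'x \<Rightarrow> real" and \<psi> :: "'y \<Rightarrow> real"
  assumes M1: "prob_space M1" and M2: "prob_space M2"
    and [measurable]: "\<phi> \<in> borel_measurable M1" "\<psi> \<in> borel_measurable M2"
    and b1: "\<And>x. x \<in> space M1 \<Longrightarrow> \<bar>\<phi> x\<bar> \<le> c1" and b2: "\<And>y. y \<in> space M2 \<Longrightarrow> \<bar>\<psi> y\<bar> \<le> c2"
  shows "integrable (M1 \<Otimes>\<^sub>M M2) (\<lambda>z. \<phi> (fst z) * \<psi> (snd z))"
    "(\<integral>z. \<phi> (fst z) * \<psi> (snd z) \<partial>(M1 \<Otimes>\<^sub>M M2)) = (\<integral>x. \<phi> x \<partial>M1) * (\<integral>y. \<psi> y \<partial>M2)"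
proof -
  interpret A: prob_space M1 by fact
  interpret B: prob_space M2 by fact
  interpret P: pair_prob_space M1 M2 ..
  show int: "integrable (M1 \<Otimes>\<^sub>M M2) (\<lambda>z. \<phi> (fst z) * \<psi> (snd z))"
  proof (rule P.P.integrable_const_bound[where B="c1 * c2"])
    show "AE z in M1 \<Otimes>\<^sub>M M2. norm (\<phi> (fst z) * \<psi> (snd z)) \<le> c1 * c2"
    proof (rule AE_I2)
      fix z assume "z \<in> space (M1 \<Otimes>\<^sub>M M2)"
      then have "fst z \<in> space M1" "snd z \<in> space M2" by (auto simp: space_pair_measure)
      then show "norm (\<phi> (fst z) * \<psi> (snd z)) \<le> c1 * c2"
        using b1 b2 by (simp add: abs_mult mult_mono')
    qed
  qed simp
  have "(\<integral>z. \<phi> (fst z) * \<psi> (snd z) \<partial>(M1 \<Otimes>\<^sub>M M2)) = (\<integral>x. (\<integral>y. \<phi> x * \<psi> y \<partial>M2) \<partial>M1)"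
    using P.integral_fst'[OF int] by simp
  also have "\<dots> = (\<integral>x. \<phi> x * (\<integral>y. \<psi> y \<partial>M2) \<partial>M1)" by simp
  also have "\<dots> = (\<integral>x. \<phi> x \<partial>M1) * (\<integral>y. \<psi> y \<partial>M2)" by simp
  finally show "(\<integral>z. \<phi> (fst z) * \<psi> (snd z) \<partial>(M1 \<Otimes>\<^sub>M M2)) = (\<integral>x. \<phi> x \<partial>M1) * (\<integral>y. \<psi> y \<partial>M2)" .
qed

lemma xlogx_bound2:
  assumes b: "1 < b" and t: "0 \<le> t" "t \<le> c"
  shows "\<bar>t * log b t\<bar> \<le> (1 + c * c) / ln b"
proof (cases "t \<le> 1")
  case True
  have "\<bar>t * log b t\<bar> \<le> 1 / ln b" using xlogx_bound[OF b t(1) True] .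
  also have "\<dots> \<le> (1 + c * c) / ln b" using b by (simp add: divide_right_mono)
  finally show ?thesis .
next
  case False
  have lnb: "0 < ln b" using b by simp
  have l0: "0 \<le> log b t" using False b by simp
  have "log b t \<le> (t - 1) / ln b" using log_le_lin[OF b] False by simp
  also have "\<dots> \<le> t / ln b" using lnb by (simp add: divide_right_mono)
  finally have h: "log b t \<le> t / ln b" .
  have "t * log b t \<le> t * (t / ln b)" by (rule mult_left_mono[OF h]) (use t in simp)
  also have "\<dots> \<le> c * (c / ln b)" using False t lnb
    by (intro mult_mono divide_right_mono) auto
  also have "\<dots> \<le> (1 + c * c) / ln b" using lnb by (simp add: divide_right_mono)
  finally show ?thesis using l0 False by simp
qed

context dtc begin

abbreviation "S0 \<equiv> (count_space UNIV :: 'v list measure)"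
definition "nuX = distr M S0 Xv"
definition "fd z = (\<Sum>x\<in>F. indicator {x} (fst z) * (g x (snd z) / P x))"

lemma prob_nuX: "prob_space nuX"
  unfolding nuX_def by (rule prob_space_distr) simp

lemma sets_nuX[simp]: "sets nuX = UNIV" and space_nuX[simp]: "space nuX = UNIV"
  by (simp_all add: nuX_def)

lemma measure_nuX: "measure nuX A = measure M {\<omega> \<in> space M. Xv \<omega> \<in> A}"
  unfolding nuX_def by (subst measure_distr) (auto intro!: arg_cong[where f="measure M"])

lemma int_nuX_ind: "(\<integral>y. indicator {x} y * indicator A y \<partial>nuX) = (if x \<in> A then P x else 0)"
proof -
  have "(\<integral>y. indicator {x} y * indicator A y \<partial>nuX) = (\<integral>y. indicator ({x} \<inter> A) y \<partial>nuX :: real)"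
    by (intro Bochner_Integration.integral_cong refl) (auto simp: indicator_def)
  also have "\<dots> = measure nuX ({x} \<inter> A)"
    by (simp only: Bochner_Integration.integral_indicator) simp
  also have "\<dots> = (if x \<in> A then P x else 0)"
  proof (cases "x \<in> A")
    case True
    then have "{\<omega> \<in> space M. Xv \<omega> \<in> {x} \<inter> A} = Ev x" by (auto simp: Ev_def)
    then show ?thesis using True by (simp add: measure_nuX P_def)
  next
    case False
    then have "{\<omega> \<in> space M. Xv \<omega> \<in> {x} \<inter> A} = {}" by auto
    then show ?thesis using False by (simp add: measure_nuX)
  qed
  finally show ?thesis .
qed

end

context dtc begin

lemma g_meas_nuW[measurable]: "g x \<in> borel_measurable nuW"
  by simp

lemma sum_ind_delta: "(\<Sum>x\<in>F. indicator {x} y * h x) = (if y \<in> F then h y else (0::real))"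
proof -
  have "(\<Sum>x\<in>F. indicator {x} y * h x) = (\<Sum>x\<in>F. if y = x then h x else 0)"
    by (intro sum.cong) (auto simp: indicator_def)
  also have "\<dots> = (if y \<in> F then h y else 0)" using finite_F by (simp add: sum.delta')
  finally show ?thesis .
qed

lemma meas_nuX_any: "h \<in> borel_measurable nuX"
  by (subst measurable_cong_sets[of nuX S0 borel borel]) auto

lemma ind_fst_meas[measurable]: "(\<lambda>z. indicator {x} (fst z) :: real) \<in> borel_measurable (nuX \<Otimes>\<^sub>M nuW)"
  by (rule measurable_compose[OF measurable_fst meas_nuX_any])

lemma g_snd_meas[measurable]: "(\<lambda>z. g x (snd z)) \<in> borel_measurable (nuX \<Otimes>\<^sub>M nuW)"
  by (rule measurable_compose[OF measurable_snd g_meas_nuW])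

lemma fd_meas[measurable]: "fd \<in> borel_measurable (nuX \<Otimes>\<^sub>M nuW)"
  unfolding fd_def[abs_def] by measurable

lemma P_nonneg: "0 \<le> P x" by (simp add: P_def)

lemma fd_nonneg: "0 \<le> fd z"
  unfolding fd_def by (intro sum_nonneg mult_nonneg_nonneg divide_nonneg_nonneg) (auto simp: g_bounds P_nonneg)

lemma fd_bound: "fd z \<le> (\<Sum>x\<in>F. 1 / P x)"
  unfolding fd_def
proof (rule sum_mono)
  fix x assume "x \<in> F"
  have "g x (snd z) / P x \<le> 1 / P x" using g_bounds P_nonneg by (simp add: divide_right_mono)
  then show "indicator {x} (fst z) * (g x (snd z) / P x) \<le> 1 / P x"
    using g_bounds P_nonneg by (auto simp: indicator_def)
qed

lemma prob_pi: "prob_space (nuX \<Otimes>\<^sub>M nuW)"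
  by (rule prob_space_pair[OF prob_nuX prob_nuW])

lemma measM_le_P: "measure M (Ev x \<inter> (W -` B \<inter> space M)) \<le> P x"
  unfolding P_def by (rule finite_measure_mono) (auto simp: Ev_sets)

lemma int_rect:
  assumes B: "B \<in> sets N"
  shows "(\<integral>z. fd z * indicator (A \<times> B) z \<partial>(nuX \<Otimes>\<^sub>M nuW)) = measure M {\<omega> \<in> space M. Xv \<omega> \<in> A \<and> W \<omega> \<in> B}"
proof -
  define m where "m x = measure M (Ev x \<inter> (W -` B \<inter> space M))" for x
  have prod: "integrable (nuX \<Otimes>\<^sub>M nuW) (\<lambda>z. (indicator {x} (fst z) * indicator A (fst z)) * (g x (snd z) / P x * indicator B (snd z)))
     \<and> (\<integral>z. (indicator {x} (fst z) * indicator A (fst z)) * (g x (snd z) / P x * indicator B (snd z)) \<partial>(nuX \<Otimes>\<^sub>M nuW))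
       = (\<integral>y. indicator {x} y * indicator A y \<partial>nuX) * (\<integral>w. g x w / P x * indicator B w \<partial>nuW)" for x
  proof -
    have b2: "\<bar>g x w / P x * indicator B w\<bar> \<le> 1 / P x" for w
      using g_bounds[of x w] P_nonneg[of x] by (auto simp: indicator_def abs_mult divide_right_mono)
    have m1: "(\<lambda>y. indicator {x} y * indicator A y :: real) \<in> borel_measurable nuX" by (rule meas_nuX_any)
    have "(\<lambda>w. g x w / P x * indicator B w) \<in> borel_measurable N" using B by measurable
    then have m2: "(\<lambda>w. g x w / P x * indicator B w) \<in> borel_measurable nuW" by simp
    have b1: "\<bar>indicator {x} y * indicator A y :: real\<bar> \<le> 1" for y by (auto simp: indicator_def)
    show ?thesis using integral_pair_product[OF prob_nuX prob_nuW m1 m2 b1 b2] by simp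
  qed
  have "(\<integral>z. fd z * indicator (A \<times> B) z \<partial>(nuX \<Otimes>\<^sub>M nuW))
      = (\<integral>z. (\<Sum>x\<in>F. (indicator {x} (fst z) * indicator A (fst z)) * (g x (snd z) / P x * indicator B (snd z))) \<partial>(nuX \<Otimes>\<^sub>M nuW))"
    unfolding fd_def
    by (intro Bochner_Integration.integral_cong refl) (auto simp: sum_distrib_right indicator_times intro!: sum.cong)
  also have "\<dots> = (\<Sum>x\<in>F. (\<integral>z. (indicator {x} (fst z) * indicator A (fst z)) * (g x (snd z) / P x * indicator B (snd z)) \<partial>(nuX \<Otimes>\<^sub>M nuW)))"
    by (rule Bochner_Integration.integral_sum) (use prod in blast)
  also have "\<dots> = (\<Sum>x\<in>F. (\<integral>y. indicator {x} y * indicator A y \<partial>nuX) * (\<integral>w. g x w / P x * indicator B w \<partial>nuW))"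
    by (intro sum.cong refl) (use prod in blast)
  also have "\<dots> = (\<Sum>x\<in>F. if x \<in> A then m x else 0)"
  proof (intro sum.cong refl)
    fix x assume "x \<in> F"
    have "(\<integral>w. g x w / P x * indicator B w \<partial>nuW) = (\<integral>w. indicator B w * g x w \<partial>nuW) / P x"
      by (simp add: mult.commute)
    also have "\<dots> = m x / P x" using int_g[OF B] by (simp add: m_def)
    finally have e: "(\<integral>w. g x w / P x * indicator B w \<partial>nuW) = m x / P x" .
    have "P x = 0 \<Longrightarrow> m x = 0" using measM_le_P[of x B] unfolding m_def
      by (metis antisym measure_nonneg)
    then have "(if x \<in> A then P x else 0) * (m x / P x) = (if x \<in> A then m x else 0)" by auto
    then show "(\<integral>y. indicator {x} y * indicator A y \<partial>nuX) * (\<integral>w. g x w / P x * indicator B w \<partial>nuW) = (if x \<in> A then m x else 0)"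
      by (simp only: int_nuX_ind e)
  qed
  also have "\<dots> = (\<Sum>x\<in>F \<inter> A. m x)" using finite_F by (simp add: sum.inter_restrict)
  also have "\<dots> = (\<Sum>x\<in>F \<inter> A. (\<integral>\<omega>. indicator (Ev x \<inter> (W -` B \<inter> space M)) \<omega> \<partial>M))"
  proof (intro sum.cong refl)
    fix x
    have "Ev x \<inter> (W -` B \<inter> space M) \<inter> space M = Ev x \<inter> (W -` B \<inter> space M)" by auto
    then show "m x = (\<integral>\<omega>. indicator (Ev x \<inter> (W -` B \<inter> space M)) \<omega> \<partial>M)"
      by (simp only: Bochner_Integration.integral_indicator m_def)
  qed
  also have "\<dots> = (\<integral>\<omega>. (\<Sum>x\<in>F \<inter> A. indicator (Ev x \<inter> (W -` B \<inter> space M)) \<omega>) \<partial>M)"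
    using B by (subst Bochner_Integration.integral_sum) (auto intro!: integrable_ind sets.Int Ev_sets measurable_sets[OF Wmeas])
  also have "\<dots> = (\<integral>\<omega>. indicator {\<omega> \<in> space M. Xv \<omega> \<in> A \<and> W \<omega> \<in> B} \<omega> \<partial>M)"
  proof (intro Bochner_Integration.integral_cong refl)
    fix \<omega> assume \<omega>: "\<omega> \<in> space M"
    have "(\<Sum>x\<in>F \<inter> A. indicator (Ev x \<inter> (W -` B \<inter> space M)) \<omega>) = (\<Sum>x\<in>F \<inter> A. indicator (Ev x) \<omega> * indicator B (W \<omega>) :: real)"
      using \<omega> by (intro sum.cong) (auto simp: indicator_def)
    also have "\<dots> = indicator {\<omega> \<in> space M. Xv \<omega> \<in> A} \<omega> * indicator B (W \<omega>)"
      using ind_sum[OF \<omega>, of A] by (simp add: sum_distrib_right)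
    finally show "(\<Sum>x\<in>F \<inter> A. indicator (Ev x \<inter> (W -` B \<inter> space M)) \<omega>) = (indicator {\<omega> \<in> space M. Xv \<omega> \<in> A \<and> W \<omega> \<in> B} \<omega> :: real)"
      using \<omega> by (auto simp: indicator_def)
  qed
  also have "\<dots> = measure M {\<omega> \<in> space M. Xv \<omega> \<in> A \<and> W \<omega> \<in> B}"
  proof -
    have "{\<omega> \<in> space M. Xv \<omega> \<in> A \<and> W \<omega> \<in> B} \<inter> space M = {\<omega> \<in> space M. Xv \<omega> \<in> A \<and> W \<omega> \<in> B}" by auto
    then show ?thesis by (simp only: Bochner_Integration.integral_indicator)
  qed
  finally show ?thesis .
qed

end

context dtc begin

lemma sets_pi: "sets (nuX \<Otimes>\<^sub>M nuW) = sets (S0 \<Otimes>\<^sub>M N)"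
  by (rule sets_pair_measure_cong) simp_all

lemma integrable_fd_rect: "integrable (nuX \<Otimes>\<^sub>M nuW) (\<lambda>z. fd z * indicator C z)" if "C \<in> sets (nuX \<Otimes>\<^sub>M nuW)" for C
proof (rule finite_measure.integrable_const_bound[where B="\<Sum>x\<in>F. 1 / P x"])
  show "finite_measure (nuX \<Otimes>\<^sub>M nuW)" using prob_pi by (simp add: prob_space_def)
  show "AE z in nuX \<Otimes>\<^sub>M nuW. norm (fd z * indicator C z) \<le> (\<Sum>x\<in>F. 1 / P x)"
    using fd_nonneg fd_bound
    by (intro AE_I2) (auto simp: indicator_def abs_of_nonneg intro: order_trans[OF fd_nonneg fd_bound])
  show "(\<lambda>z. fd z * indicator C z) \<in> borel_measurable (nuX \<Otimes>\<^sub>M nuW)" using that by measurable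
qed

lemma density_eq: "distr M (S0 \<Otimes>\<^sub>M N) (\<lambda>\<omega>. (Xv \<omega>, W \<omega>)) = density (nuX \<Otimes>\<^sub>M nuW) (\<lambda>z. ennreal (fd z))"
proof (rule measure_eqI_generator_eq[OF Int_stable_pair_measure_generator[of S0 N]])
  let ?E = "{a \<times> b |a b. a \<in> sets S0 \<and> b \<in> sets N}"
  let ?\<Omega> = "space S0 \<times> space N"
  show "?E \<subseteq> Pow ?\<Omega>" using sets.space_closed[of N] by auto
  show "sets (distr M (S0 \<Otimes>\<^sub>M N) (\<lambda>\<omega>. (Xv \<omega>, W \<omega>))) = sigma_sets ?\<Omega> ?E"
    by (simp add: sets_pair_measure)
  show "sets (density (nuX \<Otimes>\<^sub>M nuW) (\<lambda>z. ennreal (fd z))) = sigma_sets ?\<Omega> ?E"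
    by (simp add: sets_pi sets_pair_measure)
  show "range (\<lambda>i. ?\<Omega>) \<subseteq> ?E" by auto
  show "(\<Union>i. ?\<Omega>) = ?\<Omega>" by simp
  show "emeasure (distr M (S0 \<Otimes>\<^sub>M N) (\<lambda>\<omega>. (Xv \<omega>, W \<omega>))) ?\<Omega> \<noteq> \<infinity>" for i :: nat
    by (simp add: emeasure_distr)
next
  fix Z assume "Z \<in> {a \<times> b |a b. a \<in> sets S0 \<and> b \<in> sets N}"
  then obtain A B where Z: "Z = A \<times> B" and B: "B \<in> sets N" by auto
  have ZS: "Z \<in> sets (nuX \<Otimes>\<^sub>M nuW)" using Z B by (auto intro!: pair_measureI)
  have "emeasure (distr M (S0 \<Otimes>\<^sub>M N) (\<lambda>\<omega>. (Xv \<omega>, W \<omega>))) Z = emeasure M ((\<lambda>\<omega>. (Xv \<omega>, W \<omega>)) -` Z \<inter> space M)"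
    by (rule emeasure_distr) (use ZS sets_pi in auto)
  also have "(\<lambda>\<omega>. (Xv \<omega>, W \<omega>)) -` Z \<inter> space M = {\<omega> \<in> space M. Xv \<omega> \<in> A \<and> W \<omega> \<in> B}"
    using Z by auto
  also have "emeasure M {\<omega> \<in> space M. Xv \<omega> \<in> A \<and> W \<omega> \<in> B} = ennreal (measure M {\<omega> \<in> space M. Xv \<omega> \<in> A \<and> W \<omega> \<in> B})"
    by (simp add: emeasure_eq_measure)
  also have "\<dots> = ennreal (\<integral>z. fd z * indicator Z z \<partial>(nuX \<Otimes>\<^sub>M nuW))"
    using int_rect[OF B, of A] Z by simp
  also have "\<dots> = (\<integral>\<^sup>+ z. ennreal (fd z * indicator Z z) \<partial>(nuX \<Otimes>\<^sub>M nuW))"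
    by (rule nn_integral_eq_integral[symmetric]) (use integrable_fd_rect[OF ZS] fd_nonneg in auto)
  also have "\<dots> = (\<integral>\<^sup>+ z. ennreal (fd z) * indicator Z z \<partial>(nuX \<Otimes>\<^sub>M nuW))"
    by (intro nn_integral_cong) (auto simp: indicator_def)
  also have "\<dots> = emeasure (density (nuX \<Otimes>\<^sub>M nuW) (\<lambda>z. ennreal (fd z))) Z"
    by (rule emeasure_density[symmetric]) (use ZS in auto)
  finally show "emeasure (distr M (S0 \<Otimes>\<^sub>M N) (\<lambda>\<omega>. (Xv \<omega>, W \<omega>))) Z = emeasure (density (nuX \<Otimes>\<^sub>M nuW) (\<lambda>z. ennreal (fd z))) Z" .
qed

lemma measure_nuX_single: "measure nuX {x} = P x"
  by (simp add: measure_nuX P_def Ev_def)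

lemma int_nuX_single: "(\<integral>y. indicator {x} y \<partial>nuX) = P x"
  using int_nuX_ind[of x UNIV] by simp

definition "kx x w = g x w / P x * log b (g x w / P x)"

lemma kx_meas[measurable]: "kx x \<in> borel_measurable N"
  unfolding kx_def[abs_def] by measurable

lemma kx_bound: "\<bar>kx x w\<bar> \<le> (1 + (1 / P x) * (1 / P x)) / ln b"
  unfolding kx_def
  by (rule xlogx_bound2[OF b]) (use g_bounds P_nonneg in \<open>auto simp: divide_right_mono\<close>)

lemma fd_log: "fd z * log b (fd z) = (\<Sum>x\<in>F. indicator {x} (fst z) * kx x (snd z))"
proof -
  have "fd z = (if fst z \<in> F then g (fst z) (snd z) / P (fst z) else 0)"
    unfolding fd_def by (rule sum_ind_delta)
  moreover have "(\<Sum>x\<in>F. indicator {x} (fst z) * kx x (snd z)) = (if fst z \<in> F then kx (fst z) (snd z) else 0)"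
    by (rule sum_ind_delta)
  ultimately show ?thesis by (simp add: kx_def)
qed

lemma MI_formula: "mutual_information b S0 N Xv W = (\<Sum>x\<in>F. \<integral>\<omega>. Q x \<omega> * log b (Q x \<omega> / P x) \<partial>M)"
proof -
  have "mutual_information b S0 N Xv W = KL_divergence b (nuX \<Otimes>\<^sub>M nuW) (density (nuX \<Otimes>\<^sub>M nuW) (\<lambda>z. ennreal (fd z)))"
    unfolding mutual_information_def nuX_def[symmetric] nuW_def[symmetric] density_eq ..
  also have "\<dots> = (\<integral>z. fd z * log b (fd z) \<partial>(nuX \<Otimes>\<^sub>M nuW))"
    by (rule sigma_finite_measure.KL_density[OF _ b]) (auto simp: fd_nonneg prob_pi prob_space_imp_sigma_finite)
  also have "\<dots> = (\<integral>z. (\<Sum>x\<in>F. indicator {x} (fst z) * kx x (snd z)) \<partial>(nuX \<Otimes>\<^sub>M nuW))"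
    by (simp only: fd_log)
  also have "\<dots> = (\<Sum>x\<in>F. (\<integral>z. indicator {x} (fst z) * kx x (snd z) \<partial>(nuX \<Otimes>\<^sub>M nuW)))"
  proof (rule Bochner_Integration.integral_sum)
    fix x
    have m1: "(indicator {x} :: _ \<Rightarrow> real) \<in> borel_measurable nuX" by (rule meas_nuX_any)
    have m2: "kx x \<in> borel_measurable nuW" by simp
    have b1: "\<bar>indicator {x} y :: real\<bar> \<le> 1" for y by (auto simp: indicator_def)
    show "integrable (nuX \<Otimes>\<^sub>M nuW) (\<lambda>z. indicator {x} (fst z) * kx x (snd z))"
      using integral_pair_product(1)[OF prob_nuX prob_nuW m1 m2 b1 kx_bound] by simp
  qed
  also have "\<dots> = (\<Sum>x\<in>F. P x * (\<integral>w. kx x w \<partial>nuW))"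
  proof (intro sum.cong refl)
    fix x
    have m1: "(indicator {x} :: _ \<Rightarrow> real) \<in> borel_measurable nuX" by (rule meas_nuX_any)
    have m2: "kx x \<in> borel_measurable nuW" by simp
    have b1: "\<bar>indicator {x} y :: real\<bar> \<le> 1" for y by (auto simp: indicator_def)
    show "(\<integral>z. indicator {x} (fst z) * kx x (snd z) \<partial>(nuX \<Otimes>\<^sub>M nuW)) = P x * (\<integral>w. kx x w \<partial>nuW)"
      using integral_pair_product(2)[OF prob_nuX prob_nuW m1 m2 b1 kx_bound] by (simp add: int_nuX_single measure_nuX_single)
  qed
  also have "\<dots> = (\<Sum>x\<in>F. \<integral>\<omega>. Q x \<omega> * log b (Q x \<omega> / P x) \<partial>M)"
  proof (intro sum.cong refl)
    fix x
    have "(\<integral>w. kx x w \<partial>nuW) = (\<integral>\<omega>. kx x (W \<omega>) \<partial>M)"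
      unfolding nuW_def by (rule integral_distr) auto
    then have "P x * (\<integral>w. kx x w \<partial>nuW) = (\<integral>\<omega>. P x * kx x (W \<omega>) \<partial>M)" by simp
    also have "\<dots> = (\<integral>\<omega>. Q x \<omega> * log b (Q x \<omega> / P x) \<partial>M)"
      by (intro Bochner_Integration.integral_cong refl) (auto simp: kx_def Q_def log_def)
    finally show "P x * (\<integral>w. kx x w \<partial>nuW) = (\<integral>\<omega>. Q x \<omega> * log b (Q x \<omega> / P x) \<partial>M)" .
  qed
  finally show ?thesis .
qed

end

context dtc begin

lemma H_eq: "shannon_entropy b M Xv = - (\<Sum>x\<in>F. P x * log b (P x))"
  unfolding shannon_entropy_def pmass_def F_def P_def Ev_def ..

lemma CH_eq:
  assumes i: "i < d"
  shows "cond_shannon_entropy b M (X i) (Xm i) = - (\<Sum>x\<in>F. P x * log b (P x / Pm i (mi i x)))"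
proof -
  define \<phi> :: "'v list \<Rightarrow> 'v \<times> 'v list" where "\<phi> x = (x ! i, mi i x)" for x
  have img: "(\<lambda>\<omega>. (X i \<omega>, Xm i \<omega>)) ` space M = \<phi> ` F"
    unfolding F_def \<phi>_def by (auto simp: X_eq[OF i] Xm_eq image_image)
  have inj: "inj_on \<phi> F"
    by (rule inj_onI) (use phi_inj[OF i] F_props in \<open>auto simp: \<phi>_def\<close>)
  have pm1: "pmass M (\<lambda>\<omega>. (X i \<omega>, Xm i \<omega>)) (\<phi> x) = P x" if x: "x \<in> F" for x
  proof -
    have lx: "length x = d" using F_props[OF x] by simp
    have lw: "length (Xv \<omega>) = d" for \<omega> by (simp add: rvec_def)
    have "(X i \<omega> = x ! i \<and> Xm i \<omega> = mi i x) \<longleftrightarrow> Xv \<omega> = x" for \<omega>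
    proof
      assume h: "X i \<omega> = x ! i \<and> Xm i \<omega> = mi i x"
      show "Xv \<omega> = x"
        by (rule phi_inj[OF i lw lx]) (use h in \<open>simp_all add: X_eq[OF i] Xm_eq\<close>)
    next
      assume "Xv \<omega> = x"
      then show "X i \<omega> = x ! i \<and> Xm i \<omega> = mi i x" by (simp add: X_eq[OF i] Xm_eq)
    qed
    then show ?thesis unfolding pmass_def P_def Ev_def \<phi>_def by simp
  qed
  have snd_phi: "snd (\<phi> x) = mi i x" for x by (simp add: \<phi>_def)
  have pm2: "pmass M (Xm i) (mi i x) = Pm i (mi i x)" for x
    unfolding pmass_def Pm_def ..
  have "cond_shannon_entropy b M (X i) (Xm i)
      = - (\<Sum>(y, z)\<in>\<phi> ` F. pmass M (\<lambda>\<omega>. (X i \<omega>, Xm i \<omega>)) (y, z)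
          * log b (pmass M (\<lambda>\<omega>. (X i \<omega>, Xm i \<omega>)) (y, z) / pmass M (Xm i) z))"
    unfolding cond_shannon_entropy_def img ..
  also have "\<dots> = - (\<Sum>x\<in>F. pmass M (\<lambda>\<omega>. (X i \<omega>, Xm i \<omega>)) (\<phi> x)
          * log b (pmass M (\<lambda>\<omega>. (X i \<omega>, Xm i \<omega>)) (\<phi> x) / pmass M (Xm i) (snd (\<phi> x))))"
    by (subst sum.reindex[OF inj]) (simp add: case_prod_beta)
  also have "\<dots> = - (\<Sum>x\<in>F. P x * log b (P x / Pm i (mi i x)))"
    by (intro arg_cong[where f=uminus] sum.cong refl) (simp add: pm1 pm2 snd_phi)
  finally show ?thesis .
qed

lemma integrable_Qlog2: "integrable M (\<lambda>\<omega>. Q x \<omega> * log b (Q x \<omega> / P x))"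
proof (rule integrable_const_bound[where B="(1 + (1 / P x) * (1 / P x)) / ln b * P x"])
  show "AE \<omega> in M. norm (Q x \<omega> * log b (Q x \<omega> / P x)) \<le> (1 + (1 / P x) * (1 / P x)) / ln b * P x"
  proof (rule AE_I2)
    fix \<omega>
    have h: "\<bar>Q x \<omega> / P x * log b (Q x \<omega> / P x)\<bar> \<le> (1 + (1 / P x) * (1 / P x)) / ln b"
      by (rule xlogx_bound2[OF b]) (use Q_bounds P_nonneg in \<open>auto simp: divide_right_mono\<close>)
    show "norm (Q x \<omega> * log b (Q x \<omega> / P x)) \<le> (1 + (1 / P x) * (1 / P x)) / ln b * P x"
    proof (cases "P x = 0")
      case True then show ?thesis by (simp add: log_def)
    next
      case False
      then have pp: "0 < P x" using P_nonneg[of x] by simp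
      have "Q x \<omega> * log b (Q x \<omega> / P x) = P x * (Q x \<omega> / P x * log b (Q x \<omega> / P x))"
        using pp by simp
      then have "\<bar>Q x \<omega> * log b (Q x \<omega> / P x)\<bar> = P x * \<bar>Q x \<omega> / P x * log b (Q x \<omega> / P x)\<bar>"
        using pp by (simp add: abs_mult)
      also have "\<dots> \<le> P x * ((1 + (1 / P x) * (1 / P x)) / ln b)"
        by (rule mult_left_mono[OF h]) (use pp in simp)
      finally show ?thesis by (simp add: mult.commute)
    qed
  qed
qed simp

lemma int_Qlog_split: "(\<integral>\<omega>. Q x \<omega> * log b (Q x \<omega> / P x) \<partial>M) = (\<integral>\<omega>. Q x \<omega> * log b (Q x \<omega>) \<partial>M) - P x * log b (P x)"
proof (cases "P x = 0")
  case True
  have "AE \<omega> in M. Q x \<omega> = 0"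
    using integral_nonneg_eq_0_iff_AE[OF integrable_Q, of x] int_Q_P[of x] True Q_bounds by simp
  note Q0 = this
  have e1: "(\<integral>\<omega>. Q x \<omega> * log b (Q x \<omega> / P x) \<partial>M) = (\<integral>\<omega>. 0 \<partial>M)"
  proof (rule integral_cong_AE)
    show "AE \<omega> in M. Q x \<omega> * log b (Q x \<omega> / P x) = 0" using Q0 by eventually_elim simp
  qed measurable
  have e2: "(\<integral>\<omega>. Q x \<omega> * log b (Q x \<omega>) \<partial>M) = (\<integral>\<omega>. 0 \<partial>M)"
  proof (rule integral_cong_AE)
    show "AE \<omega> in M. Q x \<omega> * log b (Q x \<omega>) = 0" using Q0 by eventually_elim simp
  qed measurable
  show ?thesis using True e1 e2 by simp
next
  case False
  then have pp: "0 < P x" using P_nonneg[of x] by simp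
  have "(\<integral>\<omega>. Q x \<omega> * log b (Q x \<omega> / P x) \<partial>M) = (\<integral>\<omega>. Q x \<omega> * log b (Q x \<omega>) - Q x \<omega> * log b (P x) \<partial>M)"
  proof (intro Bochner_Integration.integral_cong refl)
    fix \<omega>
    show "Q x \<omega> * log b (Q x \<omega> / P x) = Q x \<omega> * log b (Q x \<omega>) - Q x \<omega> * log b (P x)"
    proof (cases "Q x \<omega> = 0")
      case False
      then have "0 < Q x \<omega>" using Q_bounds[of x \<omega>] by simp
      then show ?thesis using pp b by (simp add: log_divide right_diff_distrib)
    qed simp
  qed
  also have "\<dots> = (\<integral>\<omega>. Q x \<omega> * log b (Q x \<omega>) \<partial>M) - (\<integral>\<omega>. Q x \<omega> \<partial>M) * log b (P x)"
    by (simp add: Bochner_Integration.integral_diff)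
  finally show ?thesis by (simp add: int_Q_P)
qed

theorem part1:
  assumes CI: "\<And>i. i < d \<Longrightarrow> cond_indep_given M N W (X i) (Xm i)"
  shows "dual_total_correlation b M d X \<le> mutual_information b S0 N Xv W"
proof -
  have "dual_total_correlation b M d X
      = - (\<Sum>x\<in>F. P x * log b (P x)) + (\<Sum>i<d. \<Sum>x\<in>F. P x * log b (P x / Pm i (mi i x)))"
    unfolding dual_total_correlation_def H_eq by (simp add: CH_eq sum_negf)
  also have "\<dots> \<le> - (\<Sum>x\<in>F. P x * log b (P x)) + (\<integral>\<omega>. (\<Sum>x\<in>F. Q x \<omega> * log b (Q x \<omega>)) \<partial>M)"
    using core[OF CI] by simp
  also have "\<dots> = (\<Sum>x\<in>F. (\<integral>\<omega>. Q x \<omega> * log b (Q x \<omega>) \<partial>M) - P x * log b (P x))"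
    by (simp add: Bochner_Integration.integral_sum sum_subtractf)
  also have "\<dots> = mutual_information b S0 N Xv W"
    unfolding MI_formula by (simp add: int_Qlog_split)
  finally show ?thesis .
qed

end

context dtc begin

definition "Aw w = {\<omega> \<in> space M. W \<omega> = w}"
definition "pw w = measure M (Aw w)"

lemma pw_bounds: "0 \<le> pw w" "pw w \<le> 1"
  by (auto simp: pw_def)

lemma Q_le_ratio:
  assumes fib: "Aw (W \<omega>) \<in> sets M" and \<omega>: "\<omega> \<in> space M" and pos: "0 < pw (W \<omega>)"
  shows "Q x \<omega> \<le> P x / pw (W \<omega>)"
proof (rule ccontr)
  define w where "w = W \<omega>"
  define t where "t = g x w"
  assume "\<not> Q x \<omega> \<le> P x / pw (W \<omega>)"
  then have tgt: "P x / pw w < t" by (simp add: Q_def t_def w_def)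
  have wN: "w \<in> space N" using W_funcset \<omega> by (auto simp: w_def)
  define B where "B = {v \<in> space N. t \<le> g x v}"
  have B: "B \<in> sets N" unfolding B_def by measurable
  have "(\<integral>\<omega>'. indicator (Aw w) \<omega>' * t \<partial>M) \<le> (\<integral>\<omega>'. indicator B (W \<omega>') * Q x \<omega>' \<partial>M)"
  proof (rule integral_mono)
    show "integrable M (\<lambda>\<omega>'. indicator (Aw w) \<omega>' * t)" using fib by (simp add: w_def)
    show "integrable M (\<lambda>\<omega>'. indicator B (W \<omega>') * Q x \<omega>')"
    proof (rule integrable_const_bound[where B=1])
      show "AE \<omega>' in M. norm (indicator B (W \<omega>') * Q x \<omega>') \<le> 1"
        using Q_bounds by (intro AE_I2) (auto simp: indicator_def)
    qed (use B in simp)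
    fix \<omega>' assume \<omega>': "\<omega>' \<in> space M"
    show "indicator (Aw w) \<omega>' * t \<le> indicator B (W \<omega>') * Q x \<omega>'"
    proof (cases "\<omega>' \<in> Aw w")
      case True
      then have "W \<omega>' = w" by (simp add: Aw_def)
      then show ?thesis using True wN by (simp add: B_def Q_def t_def indicator_def)
    next
      case False
      then show ?thesis using Q_bounds by (simp add: indicator_def)
    qed
  qed
  also have "\<dots> = measure M (Ev x \<inter> (W -` B \<inter> space M))" by (rule int_Q[OF B])
  also have "\<dots> \<le> P x" by (rule measM_le_P)
  finally have "t * pw w \<le> P x" using fib by (simp add: pw_def w_def mult.commute)
  then have "t \<le> P x / pw w" using pos by (simp add: w_def field_simps)
  then show False using tgt by simp
qed

context
  assumes cW: "countable (W ` space M)" and fib: "\<And>w. {\<omega> \<in> space M. W \<omega> = w} \<in> sets M"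
begin

lemma Aw_sets: "Aw w \<in> sets M" using fib by (simp add: Aw_def)

lemma AE_pw_pos: "AE \<omega> in M. 0 < pw (W \<omega>)"
proof -
  have "\<forall>w\<in>W ` space M. AE \<omega> in M. W \<omega> = w \<longrightarrow> 0 < pw w"
  proof
    fix w assume "w \<in> W ` space M"
    show "AE \<omega> in M. W \<omega> = w \<longrightarrow> 0 < pw w"
    proof (cases "0 < pw w")
      case True then show ?thesis by simp
    next
      case False
      then have "pw w = 0" using pw_bounds[of w] by simp
      then have "Aw w \<in> null_sets M" using Aw_sets[of w] by (simp add: pw_def emeasure_eq_measure null_sets_def)
      then have "AE \<omega> in M. \<omega> \<notin> Aw w" by (rule AE_not_in)
      then show ?thesis using AE_space by eventually_elim (auto simp: Aw_def)
    qed
  qed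
  then have "AE \<omega> in M. \<forall>w\<in>W ` space M. W \<omega> = w \<longrightarrow> 0 < pw w"
    by (subst AE_ball_countable[OF cW])
  then show ?thesis using AE_space by eventually_elim auto
qed

lemma pointwise_bound:
  "AE \<omega> in M. (\<Sum>x\<in>F. Q x \<omega> * log b (Q x \<omega> / P x)) \<le> - log b (pw (W \<omega>))"
  using AE_pw_pos sum_Q_1 AE_space
proof eventually_elim
  case (elim \<omega>)
  define L where "L = - log b (pw (W \<omega>))"
  have L0: "0 \<le> L" using pw_bounds elim b by (simp add: L_def)
  have each: "Q x \<omega> * log b (Q x \<omega> / P x) \<le> Q x \<omega> * L" for x
  proof (cases "Q x \<omega> = 0 \<or> P x = 0")
    case True
    then show ?thesis using L0 Q_bounds by (auto simp: log_def)
  next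
    case False
    then have qp: "0 < Q x \<omega>" and pp: "0 < P x" using Q_bounds[of x \<omega>] P_nonneg[of x] by auto
    have "Q x \<omega> \<le> P x / pw (W \<omega>)" by (rule Q_le_ratio[OF Aw_sets elim(3) elim(1)])
    then have "Q x \<omega> / P x \<le> 1 / pw (W \<omega>)" using pp elim(1) by (simp add: field_simps)
    then have "log b (Q x \<omega> / P x) \<le> log b (1 / pw (W \<omega>))"
      using qp pp b elim(1) by (subst log_le_cancel_iff) auto
    also have "\<dots> = L" using elim(1) b by (simp add: L_def log_divide)
    finally show ?thesis using qp by (simp add: mult_left_mono)
  qed
  have "(\<Sum>x\<in>F. Q x \<omega> * log b (Q x \<omega> / P x)) \<le> (\<Sum>x\<in>F. Q x \<omega> * L)"
    by (rule sum_mono) (rule each)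
  also have "\<dots> = L" using elim(2) by (simp add: sum_distrib_right[symmetric])
  finally show ?case by (simp add: L_def)
qed

end

end

lemma ereal_le_enn2ereal: "ereal x \<le> enn2ereal (ennreal x)"
  by (cases "0 \<le> x") (auto simp: ennreal_neg zero_ennreal.rep_eq)

lemma neglog_nonneg:
  assumes b: "1 < b" and p: "0 \<le> p" "p \<le> 1"
  shows "0 \<le> - log b p"
proof (cases "p = 0")
  case True then show ?thesis by (simp add: log_def)
next
  case False
  then have "ln p \<le> 0" using p by simp
  moreover have "0 < ln b" using b by simp
  ultimately show ?thesis by (simp add: log_def divide_nonpos_pos)
qed

context dtc begin

context
  assumes cW: "countable (W ` space M)" and fib: "\<And>w. {\<omega> \<in> space M. W \<omega> = w} \<in> sets M"
begin

lemma MI_le_entropy: "ennreal (mutual_information b S0 N Xv W) \<le> discrete_entropy b M W"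
proof -
  define h where "h \<omega> = (\<Sum>x\<in>F. Q x \<omega> * log b (Q x \<omega> / P x))" for \<omega>
  define c where "c w = ennreal (- log b (pw w))" for w
  have inth: "integrable M h" unfolding h_def by (intro Bochner_Integration.integrable_sum integrable_Qlog2)
  have MIh: "mutual_information b S0 N Xv W = (\<integral>\<omega>. h \<omega> \<partial>M)"
    unfolding MI_formula h_def by (rule Bochner_Integration.integral_sum[symmetric]) (rule integrable_Qlog2)
  have "ennreal (\<integral>\<omega>. h \<omega> \<partial>M) \<le> ennreal (\<integral>\<omega>. max 0 (h \<omega>) \<partial>M)"
    by (intro ennreal_leI integral_mono inth integrable_max) auto
  also have "\<dots> = (\<integral>\<^sup>+ \<omega>. ennreal (max 0 (h \<omega>)) \<partial>M)"
    by (rule nn_integral_eq_integral[symmetric]) (auto intro!: integrable_max inth)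
  also have "\<dots> \<le> (\<integral>\<^sup>+ \<omega>. c (W \<omega>) \<partial>M)"
  proof (rule nn_integral_mono_AE)
    show "AE \<omega> in M. ennreal (max 0 (h \<omega>)) \<le> c (W \<omega>)"
      using pointwise_bound[OF cW fib]
    proof eventually_elim
      case (elim \<omega>)
      have "0 \<le> - log b (pw (W \<omega>))" by (rule neglog_nonneg[OF b pw_bounds])
      then show ?case using elim unfolding c_def h_def by (intro ennreal_leI) auto
    qed
  qed
  also have "\<dots> = (\<integral>\<^sup>+ \<omega>. (\<integral>\<^sup>+ w. c w * indicator (Aw w) \<omega> \<partial>count_space (W ` space M)) \<partial>M)"
  proof (intro nn_integral_cong)
    fix \<omega> assume \<omega>: "\<omega> \<in> space M"
    have "(\<integral>\<^sup>+ w. c w * indicator (Aw w) \<omega> \<partial>count_space (W ` space M))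
        = (\<integral>\<^sup>+ w. c w * indicator {W \<omega>} w \<partial>count_space (W ` space M))"
      using \<omega> by (intro nn_integral_cong) (auto simp: Aw_def indicator_def)
    also have "\<dots> = c (W \<omega>) * emeasure (count_space (W ` space M)) {W \<omega>}"
      using \<omega> by (subst nn_integral_indicator_singleton) auto
    also have "\<dots> = c (W \<omega>)" using \<omega> by simp
    finally show "c (W \<omega>) = (\<integral>\<^sup>+ w. c w * indicator (Aw w) \<omega> \<partial>count_space (W ` space M))" by simp
  qed
  also have "\<dots> = (\<integral>\<^sup>+ w. (\<integral>\<^sup>+ \<omega>. c w * indicator (Aw w) \<omega> \<partial>M) \<partial>count_space (W ` space M))"
    by (rule nn_integral_count_space_nn_integral[OF cW]) (use Aw_sets[OF cW fib] in measurable)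
  also have "\<dots> = (\<integral>\<^sup>+ w. c w * emeasure M (Aw w) \<partial>count_space (W ` space M))"
    by (intro nn_integral_cong nn_integral_cmult_indicator Aw_sets[OF cW fib])
  also have "\<dots> = discrete_entropy b M W"
    unfolding discrete_entropy_def
  proof (intro nn_integral_cong)
    fix w
    have "pmass M W w = pw w" by (simp add: pmass_def pw_def Aw_def)
    moreover have "0 \<le> - log b (pw w)" by (rule neglog_nonneg[OF b pw_bounds])
    ultimately show "c w * emeasure M (Aw w) = ennreal (- (pmass M W w * log b (pmass M W w)))"
      unfolding c_def using pw_bounds[of w]
      by (simp add: emeasure_eq_measure pw_def[symmetric] ennreal_mult[symmetric] Aw_sets[OF cW fib] mult.commute)
  qed
  finally show ?thesis using MIh by simp
qed

end

end

theorem mainTheorem14: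
  fixes M :: "'a measure" and N :: "'w measure" and b :: real and d :: nat
    and X :: "nat \<Rightarrow> 'a \<Rightarrow> 'v" and S :: "nat \<Rightarrow> 'v set" and W :: "'a \<Rightarrow> 'w"
  assumes "prob_space M" and "1 < b"
    and "\<And>i. i < d \<Longrightarrow> finite (S i)"
    and "\<And>i. i < d \<Longrightarrow> X i \<in> measurable M (count_space UNIV)"
    and "\<And>i \<omega>. i < d \<Longrightarrow> \<omega> \<in> space M \<Longrightarrow> X i \<omega> \<in> S i"
    and "W \<in> measurable M N"
    and "\<And>i. i < d \<Longrightarrow> cond_indep_given M N W (X i) (rvec_minus d X i)"
  shows "dual_total_correlation b M d X
           \<le> prob_space.mutual_information M b (count_space UNIV) N (rvec d X) W
         \<and> (countable (W ` space M) \<and> (\<forall>w. {\<omega> \<in> space M. W \<omega> = w} \<in> sets M) \<longrightarrow>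
           ereal (dual_total_correlation b M d X) \<le> enn2ereal (discrete_entropy b M W))"
proof -
  interpret dtc M N b d X S W
    by (intro dtc.intro dtc_axioms.intro) (use assms in auto)
  have p1: "dual_total_correlation b M d X \<le> mutual_information b S0 N Xv W"
    by (rule part1) (use assms(7) in auto)
  show ?thesis
  proof (intro conjI impI)
    show "dual_total_correlation b M d X \<le> mutual_information b S0 N Xv W" by (rule p1)
    assume h: "countable (W ` space M) \<and> (\<forall>w. {\<omega> \<in> space M. W \<omega> = w} \<in> sets M)"
    have "ereal (dual_total_correlation b M d X) \<le> ereal (mutual_information b S0 N Xv W)"
      using p1 by simp
    also have "\<dots> \<le> enn2ereal (ennreal (mutual_information b S0 N Xv W))" by (rule ereal_le_enn2ereal)
    also have "\<dots> \<le> enn2ereal (discrete_entropy b M W)"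
      using MI_le_entropy h by (simp add: less_eq_ennreal.rep_eq[symmetric])
    finally show "ereal (dual_total_correlation b M d X) \<le> enn2ereal (discrete_entropy b M W)" .
  qed
qed

end
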